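(* Let $\beta<-1$ and $(d_i)_{i\ge1}=d(l_\beta,\beta)$. Let $D\subset S_\beta$ be the set of sequences of $S_\beta$ which are (admissible) concatenations of words of the form $d_1d_2\cdots d_{2n-1}$, $n\ge1$. Let $m$ be an ergodic $\sigma$-invariant measure on $S_\beta$ of maximal entropy. If $m$ has support $D$, then $h_m(S_\beta)\le\log\frac{1+\sqrt5}{2}$.
   Context: Let $\beta<-1$, $l_\beta=\frac{\beta}{1-\beta}$, $r_\beta=l_\beta+1$, $I_\beta=[l_\beta,r_\beta)$ and $T_\beta:I_\beta\to I_\beta$, $T_\beta(x)=\beta x-\lfloor \beta x-l_\beta\rfloor$. For $x\in I_\beta$, $d(x,\beta)=(x_i)_{i\ge1}$ with $x_i=\lfloor \beta T_\beta^{i-1}(x)-l_\beta\rfloor$; digits lie in $\mathcal A=\{0,\dots,\lfloor|\beta|\rfloor\}$. Put $(r_i)_{i\ge1}=\lim_{x\to r_\beta^-}d(x,\beta)$. Alternating order: $(x_i)\prec(y_i)$ iff there is $k\ge1$ with $x_i=y_i$ for $i<k$ and $(-1)^k(x_k-y_k)<0$. $S_\beta$ is the set of $(x_i)_{i\in\mathbb Z}\in\mathcal A^{\mathbb Z}$ with $(d_i)_{i\ge1}\preceq(x_{m+i})_{i\ge1}\preceq(r_i)_{i\ge1}$ for all $m\in\mathbb Z$, with the left shift $\sigma$; $h_m(S_\beta)$ denotes the metric entropy of $\sigma$ with respect to $m$. *)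

theory Defs
  imports "HOL-Probability.Probability"
begin

definition l_beta :: "real \<Rightarrow> real" where
  "l_beta \<beta> = \<beta> / (1 - \<beta>)"

definition r_beta :: "real \<Rightarrow> real" where
  "r_beta \<beta> = l_beta \<beta> + 1"

definition T_beta :: "real \<Rightarrow> real \<Rightarrow> real" where
  "T_beta \<beta> x = \<beta> * x - real_of_int \<lfloor>\<beta> * x - l_beta \<beta>\<rfloor>"

text \<open>Digit sequence d(x,beta) = (x_i)_{i>=1}; only indices i >= 1 are meaningful.\<close>
definition dexp :: "real \<Rightarrow> real \<Rightarrow> nat \<Rightarrow> int" where
  "dexp \<beta> x i = \<lfloor>\<beta> * ((T_beta \<beta> ^^ (i - 1)) x) - l_beta \<beta>\<rfloor>"

definition dseq :: "real \<Rightarrow> nat \<Rightarrow> int" where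
  "dseq \<beta> = dexp \<beta> (l_beta \<beta>)"

text \<open>(r_i) = lim_{x -> r_beta^-} d(x,beta), componentwise (product topology on digit sequences).\<close>
definition rseq :: "real \<Rightarrow> nat \<Rightarrow> int" where
  "rseq \<beta> i = (THE a. eventually (\<lambda>x. dexp \<beta> x i = a) (at_left (r_beta \<beta>)))"

definition alphabet :: "real \<Rightarrow> int set" where
  "alphabet \<beta> = {0 .. \<lfloor>\<bar>\<beta>\<bar>\<rfloor>}"

definition alt_less :: "(nat \<Rightarrow> int) \<Rightarrow> (nat \<Rightarrow> int) \<Rightarrow> bool" where
  "alt_less x y \<longleftrightarrow> (\<exists>k\<ge>1. (\<forall>i. 1 \<le> i \<and> i < k \<longrightarrow> x i = y i) \<and> (-1) ^ k * (x k - y k) < 0)"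

definition alt_le :: "(nat \<Rightarrow> int) \<Rightarrow> (nat \<Rightarrow> int) \<Rightarrow> bool" where
  "alt_le x y \<longleftrightarrow> alt_less x y \<or> (\<forall>i\<ge>1. x i = y i)"

definition S_beta :: "real \<Rightarrow> (int \<Rightarrow> int) set" where
  "S_beta \<beta> = {x. (\<forall>i. x i \<in> alphabet \<beta>) \<and>
     (\<forall>m. alt_le (dseq \<beta>) (\<lambda>i. x (m + int i)) \<and> alt_le (\<lambda>i. x (m + int i)) (rseq \<beta>))}"

definition shift :: "(int \<Rightarrow> int) \<Rightarrow> (int \<Rightarrow> int)" where
  "shift x = (\<lambda>i. x (i + 1))"

definition S_meas :: "real \<Rightarrow> (int \<Rightarrow> int) measure" where
  "S_meas \<beta> = restrict_space (PiM UNIV (\<lambda>_. count_space UNIV)) (S_beta \<beta>)"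

definition shift_inv_prob :: "real \<Rightarrow> (int \<Rightarrow> int) measure \<Rightarrow> bool" where
  "shift_inv_prob \<beta> \<mu> \<longleftrightarrow> prob_space \<mu> \<and> sets \<mu> = sets (S_meas \<beta>) \<and>
     space \<mu> = S_beta \<beta> \<and> shift \<in> measurable \<mu> \<mu> \<and>
     (\<forall>A\<in>sets \<mu>. emeasure \<mu> (shift -` A \<inter> space \<mu>) = emeasure \<mu> A)"

definition ergodic :: "'a measure \<Rightarrow> ('a \<Rightarrow> 'a) \<Rightarrow> bool" where
  "ergodic M T \<longleftrightarrow> (\<forall>A\<in>sets M. T -` A \<inter> space M = A \<longrightarrow> measure M A = 0 \<or> measure M A = 1)"

definition meas_partition :: "'a measure \<Rightarrow> 'a set set \<Rightarrow> bool" where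
  "meas_partition M P \<longleftrightarrow> finite P \<and> P \<subseteq> sets M \<and> \<Union>P = space M \<and>
     (\<forall>A\<in>P. \<forall>B\<in>P. A \<noteq> B \<longrightarrow> A \<inter> B = {})"

definition part_entropy :: "'a measure \<Rightarrow> 'a set set \<Rightarrow> real" where
  "part_entropy M P = - (\<Sum>A\<in>P. measure M A * ln (measure M A))"

definition join_part :: "'a measure \<Rightarrow> ('a \<Rightarrow> 'a) \<Rightarrow> 'a set set \<Rightarrow> nat \<Rightarrow> 'a set set" where
  "join_part M T P n = {A. \<exists>f. (\<forall>i<n. f i \<in> P) \<and> A = space M \<inter> (\<Inter>i<n. (T ^^ i) -` f i)}"

definition entropy_wrt :: "'a measure \<Rightarrow> ('a \<Rightarrow> 'a) \<Rightarrow> 'a set set \<Rightarrow> real" where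
  "entropy_wrt M T P = lim (\<lambda>n. part_entropy M (join_part M T P (Suc n)) / real (Suc n))"

definition ks_entropy :: "'a measure \<Rightarrow> ('a \<Rightarrow> 'a) \<Rightarrow> ereal" where
  "ks_entropy M T = (SUP P\<in>{P. meas_partition M P}. ereal (entropy_wrt M T P))"

definition support :: "('a::topological_space) measure \<Rightarrow> 'a set" where
  "support M = {x \<in> space M. \<forall>U. open U \<longrightarrow> x \<in> U \<longrightarrow> emeasure M (U \<inter> space M) > 0}"

text \<open>Sequences in S_beta that are bi-infinite concatenations of words d_1 ... d_{2n-1}:
  c enumerates the (strictly increasing, hence bi-unbounded) cut points.\<close>
definition D_set :: "real \<Rightarrow> (int \<Rightarrow> int) set" where
  "D_set \<beta> = {x \<in> S_beta \<beta>. \<exists>c :: int \<Rightarrow> int. strict_mono c \<and>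
      (\<forall>k. odd (c (k + 1) - c k)) \<and>
      (\<forall>k j. 0 \<le> j \<and> j < c (k + 1) - c k \<longrightarrow> x (c k + j) = dseq \<beta> (nat j + 1))}"

end

theory Submission
  imports Defs
begin

definition pr :: "'a measure \<Rightarrow> ('a \<Rightarrow> 'b) \<Rightarrow> 'b \<Rightarrow> real" where
  "pr M V v = measure M (V -` {v} \<inter> space M)"

definition ent :: "'a measure \<Rightarrow> ('a \<Rightarrow> 'b) \<Rightarrow> real" where
  "ent M V = - (\<Sum>v\<in>V`space M. pr M V v * ln (pr M V v))"

lemma gibbs_term:
  fixes p q :: real
  assumes "0 \<le> p" "0 \<le> q" "p > 0 \<Longrightarrow> q > 0"
  shows "p * (ln q - ln p) \<le> q - p"
proof (cases "p = 0")
  case True then show ?thesis using assms by simp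
next
  case False
  then have p: "p > 0" using assms by simp
  then have q: "q > 0" using assms by simp
  have "ln (q / p) \<le> q / p - 1" using p q by (intro ln_le_minus_one) simp
  then have "p * ln (q/p) \<le> p * (q/p - 1)" using p by (intro mult_left_mono) auto
  moreover have "p * (q/p - 1) = q - p" using p by (simp add: field_simps)
  ultimately show ?thesis using p q by (simp add: ln_div)
qed

lemma gibbs_group:
  fixes p :: "'b \<Rightarrow> real"
  assumes fin: "finite J" and nn: "\<And>v. v \<in> J \<Longrightarrow> 0 \<le> p v" and s: "s = (\<Sum>v\<in>J. p v)" and spos: "s > 0"
  shows "- (\<Sum>v\<in>J. p v * ln (p v)) \<le> s * ln (real (card J) / s)"
proof -
  have Jne: "J \<noteq> {}" using spos s by auto
  then have cJ: "real (card J) > 0" using fin by (simp add: card_gt_0_iff)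
  define q where "q = s / real (card J)"
  have qpos: "q > 0" using cJ spos by (simp add: q_def)
  have "(\<Sum>v\<in>J. p v * (ln q - ln (p v))) \<le> (\<Sum>v\<in>J. q - p v)"
    by (rule sum_mono, rule gibbs_term) (use nn qpos in auto)
  also have "\<dots> = real (card J) * q - s" by (simp add: sum_subtractf s)
  also have "\<dots> = 0" using cJ by (simp add: q_def)
  finally have "s * ln q - (\<Sum>v\<in>J. p v * ln (p v)) \<le> 0"
    by (simp add: right_diff_distrib sum_subtractf s sum_distrib_right)
  moreover have "ln (real (card J) / s) = - ln q"
    using cJ spos by (simp add: q_def ln_div)
  ultimately show ?thesis by simp
qed

context prob_space
begin

lemma pr_nonneg: "0 \<le> pr M V v" by (simp add: pr_def)

lemma pr_le_1: "pr M V v \<le> 1" by (simp add: pr_def)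

lemma pr_out: "v \<notin> V ` space M \<Longrightarrow> pr M V v = 0"
  unfolding pr_def by (subgoal_tac "V -` {v} \<inter> space M = {}") auto

lemma ent_superset:
  assumes "finite F" "V ` space M \<subseteq> F"
  shows "ent M V = - (\<Sum>v\<in>F. pr M V v * ln (pr M V v))"
  unfolding ent_def using assms
  by (intro arg_cong[where f=uminus] sum.mono_neutral_left) (auto simp: pr_out)

lemma ent_cong:
  assumes "\<And>x. x \<in> space M \<Longrightarrow> V x = W x"
  shows "ent M V = ent M W"
proof -
  have "V ` space M = W ` space M" using assms by (auto simp: image_def)
  moreover have "pr M V v = pr M W v" for v
    unfolding pr_def using assms by (intro arg_cong[where f=prob]) auto
  ultimately show ?thesis unfolding ent_def by simp
qed

lemma pr_comp:
  assumes V: "simple_function M V"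
  shows "pr M (g \<circ> V) u = (\<Sum>v\<in>{v \<in> V`space M. g v = u}. pr M V v)"
proof -
  have fin: "finite {v \<in> V`space M. g v = u}" using simple_functionD(1)[OF V] by simp
  have "(g \<circ> V) -` {u} \<inter> space M = (\<Union>v\<in>{v \<in> V`space M. g v = u}. V -` {v} \<inter> space M)"
    by auto
  then have "pr M (g \<circ> V) u = measure M (\<Union>v\<in>{v \<in> V`space M. g v = u}. V -` {v} \<inter> space M)"
    by (simp add: pr_def)
  also have "\<dots> = (\<Sum>v\<in>{v \<in> V`space M. g v = u}. measure M (V -` {v} \<inter> space M))"
    using fin simple_functionD(2)[OF V]
    by (intro finite_measure_finite_Union) (auto simp: disjoint_family_on_def)
  finally show ?thesis by (simp add: pr_def)
qed

lemma marg_sum: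
  assumes V: "simple_function M V"
  shows "(\<Sum>v\<in>V`space M. pr M V v * f (g v)) = (\<Sum>u\<in>(g \<circ> V)`space M. pr M (g \<circ> V) u * f u)"
proof -
  have fin: "finite (V`space M)" using simple_functionD(1)[OF V] .
  have "(\<Sum>v\<in>V`space M. pr M V v * f (g v)) =
        (\<Sum>u\<in>g ` V`space M. (\<Sum>v\<in>{v \<in> V`space M. g v = u}. pr M V v * f (g v)))"
    by (rule sum.image_gen[OF fin])
  also have "\<dots> = (\<Sum>u\<in>g ` V`space M. (\<Sum>v\<in>{v \<in> V`space M. g v = u}. pr M V v) * f u)"
    by (intro sum.cong refl) (auto simp: sum_distrib_right)
  also have "\<dots> = (\<Sum>u\<in>(g \<circ> V)`space M. pr M (g \<circ> V) u * f u)"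
    by (simp add: pr_comp[OF V] image_comp)
  finally show ?thesis .
qed

lemma pr_comp_ge:
  assumes V: "simple_function M V" and v: "v \<in> V ` space M"
  shows "pr M V v \<le> pr M (g \<circ> V) (g v)"
  unfolding pr_comp[OF V] using v simple_functionD(1)[OF V]
  by (intro member_le_sum) (auto simp: pr_nonneg)

lemma ent_comp_le:
  assumes V: "simple_function M V"
  shows "ent M (g \<circ> V) \<le> ent M V"
proof -
  have "ent M (g \<circ> V) = - (\<Sum>v\<in>V`space M. pr M V v * ln (pr M (g \<circ> V) (g v)))"
    unfolding ent_def marg_sum[OF V, where f="\<lambda>u. ln (pr M (g \<circ> V) u)" and g=g] ..
  also have "\<dots> \<le> - (\<Sum>v\<in>V`space M. pr M V v * ln (pr M V v))"
  proof -
    have "(\<Sum>v\<in>V`space M. pr M V v * ln (pr M V v)) \<le> (\<Sum>v\<in>V`space M. pr M V v * ln (pr M (g \<circ> V) (g v)))"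
    proof (rule sum_mono)
      fix v assume v: "v \<in> V ` space M"
      show "pr M V v * ln (pr M V v) \<le> pr M V v * ln (pr M (g \<circ> V) (g v))"
      proof (cases "pr M V v = 0")
        case False
        then have "pr M V v > 0" using pr_nonneg[of V v] by simp
        then show ?thesis using pr_comp_ge[OF V v, of g]
          by (intro mult_left_mono) auto
      qed simp
    qed
    then show ?thesis by simp
  qed
  finally show ?thesis unfolding ent_def .
qed

lemma ent_inj:
  assumes V: "simple_function M V" and inj: "inj_on g (V ` space M)"
  shows "ent M (g \<circ> V) = ent M V"
proof (rule antisym)
  show "ent M (g \<circ> V) \<le> ent M V" by (rule ent_comp_le[OF V])
  have "ent M V = ent M (the_inv_into (V ` space M) g \<circ> (g \<circ> V))"
    by (rule ent_cong) (simp add: the_inv_into_f_f[OF inj])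
  also have "\<dots> \<le> ent M (g \<circ> V)"
    by (rule ent_comp_le) (use V in auto)
  finally show "ent M V \<le> ent M (g \<circ> V)" .
qed

lemma ent_nonneg: "0 \<le> ent M V"
proof -
  have "(\<Sum>v\<in>V`space M. pr M V v * ln (pr M V v)) \<le> 0"
  proof (rule sum_nonpos)
    fix v
    show "pr M V v * ln (pr M V v) \<le> 0"
    proof (cases "pr M V v = 0")
      case False
      then have "pr M V v > 0" using pr_nonneg[of V v] by simp
      then have "ln (pr M V v) \<le> 0" using pr_le_1[of V v] by simp
      then show ?thesis using pr_nonneg[of V v] by (simp add: mult_nonneg_nonpos)
    qed simp
  qed
  then show ?thesis unfolding ent_def by simp
qed

end

context prob_space
begin

lemma log_e: "log (exp 1) x = ln x" by (simp add: log_def)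

lemma sd_pr: "simple_function M V \<Longrightarrow> simple_distributed M V (pr M V)"
  by (rule simple_distributedI) (auto simp: pr_nonneg pr_def)

lemma ssa:
  assumes X: "simple_function M X" and Y: "simple_function M Y" and Z: "simple_function M Z"
  shows "ent M (\<lambda>x. (X x, Y x, Z x)) + ent M Z \<le> ent M (\<lambda>x. (X x, Z x)) + ent M (\<lambda>x. (Y x, Z x))"
proof -
  interpret information_space M "exp 1" by standard simp
  define T where "T = (\<lambda>x. (X x, Y x, Z x))"
  define XZ where "XZ = (\<lambda>x. (X x, Z x))"
  define YZ where "YZ = (\<lambda>x. (Y x, Z x))"
  have sT: "simple_function M T" unfolding T_def using X Y Z by (intro simple_function_Pair)
  have sXZ: "simple_function M XZ" unfolding XZ_def using X Z by (intro simple_function_Pair)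
  have sYZ: "simple_function M YZ" unfolding YZ_def using Y Z by (intro simple_function_Pair)
  have gxz: "(\<lambda>(x,y,z). (x,z)) \<circ> T = XZ" by (auto simp: T_def XZ_def fun_eq_iff)
  have gyz: "(\<lambda>(x,y,z). (y,z)) \<circ> T = YZ" by (auto simp: T_def YZ_def fun_eq_iff)
  have gz: "(\<lambda>(x,y,z). z) \<circ> T = Z" by (auto simp: T_def fun_eq_iff)
  have "0 \<le> conditional_mutual_information (exp 1) (count_space (X`space M)) (count_space (Y`space M)) (count_space (Z`space M)) X Y Z" by (rule conditional_mutual_information_nonneg[OF X Y Z])
  also have "conditional_mutual_information (exp 1) (count_space (X`space M)) (count_space (Y`space M)) (count_space (Z`space M)) X Y Z = (\<Sum>(x, y, z)\<in>T`space M. pr M T (x, y, z) *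
      log (exp 1) (pr M T (x, y, z) / (pr M XZ (x, z) * (pr M YZ (y,z) / pr M Z z))))"
    unfolding T_def XZ_def YZ_def
    by (rule conditional_mutual_information_eq[OF sd_pr[OF Z] sd_pr[OF sYZ[unfolded YZ_def]]
          sd_pr[OF sXZ[unfolded XZ_def]] sd_pr[OF sT[unfolded T_def]]])
  also have "\<dots> = (\<Sum>t\<in>T`space M. pr M T t * ln (pr M T t) - pr M T t * ln (pr M XZ ((\<lambda>(x,y,z). (x,z)) t))
       - pr M T t * ln (pr M YZ ((\<lambda>(x,y,z). (y,z)) t)) + pr M T t * ln (pr M Z ((\<lambda>(x,y,z). z) t)))"
  proof (intro sum.cong refl)
    fix t assume t: "t \<in> T ` space M"
    obtain x y z where txyz: "t = (x, y, z)" by (cases t) auto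
    show "(case t of (x, y, z) \<Rightarrow> pr M T (x, y, z) *
      log (exp 1) (pr M T (x, y, z) / (pr M XZ (x, z) * (pr M YZ (y,z) / pr M Z z)))) =
      pr M T t * ln (pr M T t) - pr M T t * ln (pr M XZ ((\<lambda>(x,y,z). (x,z)) t))
       - pr M T t * ln (pr M YZ ((\<lambda>(x,y,z). (y,z)) t)) + pr M T t * ln (pr M Z ((\<lambda>(x,y,z). z) t))"
    proof (cases "pr M T t = 0")
      case True then show ?thesis by (simp add: txyz)
    next
      case False
      then have p: "pr M T t > 0" using pr_nonneg[of T t] by simp
      have a: "pr M XZ (x,z) > 0" using pr_comp_ge[OF sT t, of "\<lambda>(x,y,z). (x,z)"] p unfolding gxz by (simp add: txyz)
      have b: "pr M YZ (y,z) > 0" using pr_comp_ge[OF sT t, of "\<lambda>(x,y,z). (y,z)"] p unfolding gyz by (simp add: txyz)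
      have c: "pr M Z z > 0" using pr_comp_ge[OF sT t, of "\<lambda>(x,y,z). z"] p unfolding gz by (simp add: txyz)
      show ?thesis using p a b c
        by (simp add: txyz log_e ln_div ln_mult algebra_simps)
    qed
  qed
  also have "\<dots> = (\<Sum>t\<in>T`space M. pr M T t * ln (pr M T t)) - (\<Sum>t\<in>T`space M. pr M T t * ln (pr M XZ ((\<lambda>(x,y,z). (x,z)) t)))
     - (\<Sum>t\<in>T`space M. pr M T t * ln (pr M YZ ((\<lambda>(x,y,z). (y,z)) t))) + (\<Sum>t\<in>T`space M. pr M T t * ln (pr M Z ((\<lambda>(x,y,z). z) t)))"
    by (simp add: sum.distrib sum_subtractf)
  also have "\<dots> = - ent M T + ent M XZ + ent M YZ - ent M Z"
  proof -
    have m1: "(\<Sum>t\<in>T`space M. pr M T t * ln (pr M XZ ((\<lambda>(x,y,z). (x,z)) t))) = (\<Sum>u\<in>XZ`space M. pr M XZ u * ln (pr M XZ u))"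
      using marg_sum[OF sT, of "\<lambda>u. ln (pr M XZ u)" "\<lambda>(x,y,z). (x,z)"] unfolding gxz .
    have m2: "(\<Sum>t\<in>T`space M. pr M T t * ln (pr M YZ ((\<lambda>(x,y,z). (y,z)) t))) = (\<Sum>u\<in>YZ`space M. pr M YZ u * ln (pr M YZ u))"
      using marg_sum[OF sT, of "\<lambda>u. ln (pr M YZ u)" "\<lambda>(x,y,z). (y,z)"] unfolding gyz .
    have m3: "(\<Sum>t\<in>T`space M. pr M T t * ln (pr M Z ((\<lambda>(x,y,z). z) t))) = (\<Sum>u\<in>Z`space M. pr M Z u * ln (pr M Z u))"
      using marg_sum[OF sT, of "\<lambda>u. ln (pr M Z u)" "\<lambda>(x,y,z). z"] unfolding gz .
    show ?thesis unfolding m1 m2 m3 ent_def by simp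
  qed
  finally show ?thesis unfolding T_def XZ_def YZ_def by simp
qed

lemma ent_const: "ent M (\<lambda>x. c) = 0"
proof -
  have "(\<lambda>x. c) ` space M = {c}" using not_empty by auto
  moreover have "pr M (\<lambda>x. c) c = 1" by (simp add: pr_def prob_space)
  ultimately show ?thesis by (simp add: ent_def)
qed

lemma ent_pair_le:
  assumes X: "simple_function M X" and Y: "simple_function M Y"
  shows "ent M (\<lambda>x. (X x, Y x)) \<le> ent M X + ent M Y"
proof -
  have Z: "simple_function M (\<lambda>x. ())" by simp
  have "ent M (\<lambda>x. (X x, Y x, ())) + ent M (\<lambda>x. ()) \<le> ent M (\<lambda>x. (X x, ())) + ent M (\<lambda>x. (Y x, ()))"
    by (rule ssa[OF X Y Z])
  moreover have "ent M (\<lambda>x. (X x, Y x, ())) = ent M (\<lambda>x. (X x, Y x))"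
    using ent_inj[of "\<lambda>x. (X x, Y x)" "\<lambda>(a,b). (a,b,())"] simple_function_Pair[OF X Y]
    by (simp add: comp_def inj_on_def)
  moreover have "ent M (\<lambda>x. (X x, ())) = ent M X"
    using ent_inj[OF X, of "\<lambda>a. (a,())"] by (simp add: comp_def inj_on_def)
  moreover have "ent M (\<lambda>x. (Y x, ())) = ent M Y"
    using ent_inj[OF Y, of "\<lambda>a. (a,())"] by (simp add: comp_def inj_on_def)
  ultimately show ?thesis using ent_const[of "()"] by simp
qed

end

definition mpres :: "'a measure \<Rightarrow> ('a \<Rightarrow> 'a) \<Rightarrow> bool" where
  "mpres M T \<longleftrightarrow> T \<in> measurable M M \<and> (\<forall>A\<in>sets M. emeasure M (T -` A \<inter> space M) = emeasure M A)"

lemma mpres_funpow: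
  assumes "mpres M T" shows "mpres M (T ^^ n)"
proof (induction n)
  case 0 then show ?case by (simp add: mpres_def Int_absorb1 sets.sets_into_space)
next
  case (Suc n)
  have T: "T \<in> measurable M M" using assms by (simp add: mpres_def)
  have Tn: "T ^^ n \<in> measurable M M" using Suc by (simp add: mpres_def)
  have "(T ^^ Suc n) \<in> measurable M M" by (rule measurable_compose_n[OF T])
  moreover have "emeasure M ((T ^^ Suc n) -` A \<inter> space M) = emeasure M A" if A: "A \<in> sets M" for A
  proof -
    have e1: "(T ^^ Suc n) -` A \<inter> space M = T -` ((T ^^ n) -` A \<inter> space M) \<inter> space M"
      using measurable_space[OF T] by (auto simp: funpow_Suc_right funpow_swap1)
    moreover have B: "(T ^^ n) -` A \<inter> space M \<in> sets M" using Tn A by (rule measurable_sets)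
    have "emeasure M (T -` ((T ^^ n) -` A \<inter> space M) \<inter> space M) = emeasure M ((T ^^ n) -` A \<inter> space M)"
      using assms B unfolding mpres_def by blast
    also have "\<dots> = emeasure M A" using Suc.IH A unfolding mpres_def by blast
    finally show ?thesis unfolding e1 .
  qed
  ultimately show ?case unfolding mpres_def by blast
qed

context prob_space
begin

lemma ent_mpres:
  assumes T: "mpres M T" and V: "simple_function M V"
  shows "ent M (V \<circ> T) = ent M V"
proof -
  have Tm: "T \<in> measurable M M" using T by (simp add: mpres_def)
  have pr_eq: "pr M (V \<circ> T) v = pr M V v" for v
  proof -
    have "(V \<circ> T) -` {v} \<inter> space M = T -` (V -` {v} \<inter> space M) \<inter> space M"
      using measurable_space[OF Tm] by auto
    moreover have "V -` {v} \<inter> space M \<in> sets M" using simple_functionD(2)[OF V] .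
    then have "emeasure M (T -` (V -` {v} \<inter> space M) \<inter> space M) = emeasure M (V -` {v} \<inter> space M)"
      using T unfolding mpres_def by blast
    ultimately show ?thesis unfolding pr_def measure_def by metis
  qed
  have sub: "(V \<circ> T) ` space M \<subseteq> V ` space M" using measurable_space[OF Tm] by auto
  have "ent M (V \<circ> T) = - (\<Sum>v\<in>V ` space M. pr M (V \<circ> T) v * ln (pr M (V \<circ> T) v))"
    by (rule ent_superset[OF simple_functionD(1)[OF V] sub])
  then show ?thesis by (simp add: pr_eq ent_def)
qed

lemma gibbs_group':
  fixes p :: "'b \<Rightarrow> real"
  assumes fin: "finite J" and nn: "\<And>v. v \<in> J \<Longrightarrow> 0 \<le> p v"
  shows "- (\<Sum>v\<in>J. p v * ln (p v)) \<le> (\<Sum>v\<in>J. p v) * ln (real (card J)) - (\<Sum>v\<in>J. p v) * ln (\<Sum>v\<in>J. p v)"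
proof (cases "(\<Sum>v\<in>J. p v) = 0")
  case True
  then have "\<forall>v\<in>J. p v = 0" using sum_nonneg_eq_0_iff[OF fin] nn by blast
  then show ?thesis using True by simp
next
  case False
  then have s: "(\<Sum>v\<in>J. p v) > 0" using sum_nonneg[of J p] nn by force
  then have "J \<noteq> {}" by auto
  then have "real (card J) > 0" using fin by (simp add: card_gt_0_iff)
  then show ?thesis using gibbs_group[OF fin nn refl s] s by (simp add: ln_div right_diff_distrib)
qed

lemma sum_pr_space:
  assumes V: "simple_function M V"
  shows "(\<Sum>v\<in>V`space M. pr M V v) = 1"
proof -
  have e: "{v \<in> V`space M. (\<lambda>_. True) v = True} = V`space M" by simp
  have "pr M ((\<lambda>_. True) \<circ> V) True = (\<Sum>v\<in>{v \<in> V`space M. (\<lambda>_. True) v = True}. pr M V v)"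
    using pr_comp[OF V, of "\<lambda>_. True" True] .
  also have "\<dots> = (\<Sum>v\<in>V`space M. pr M V v)" unfolding e ..
  finally have 1: "pr M ((\<lambda>_. True) \<circ> V) True = (\<Sum>v\<in>V`space M. pr M V v)" .
  have "((\<lambda>_. True) \<circ> V) -` {True} \<inter> space M = space M" by auto
  then have "pr M ((\<lambda>_. True) \<circ> V) True = 1" unfolding pr_def using prob_space by metis
  then show ?thesis using 1 by simp
qed

lemma pr_notin:
  assumes V: "simple_function M V"
  shows "prob {x \<in> space M. V x \<notin> G} = (\<Sum>v\<in>V`space M - G. pr M V v)"
proof -
  have e: "{v \<in> V`space M. (\<lambda>v. v \<notin> G) v = True} = V`space M - G" by blast
  have "pr M ((\<lambda>v. v \<notin> G) \<circ> V) True = (\<Sum>v\<in>{v \<in> V`space M. (\<lambda>v. v \<notin> G) v = True}. pr M V v)"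
    using pr_comp[OF V, of "\<lambda>v. v \<notin> G" True] .
  also have "\<dots> = (\<Sum>v\<in>V`space M - G. pr M V v)" unfolding e ..
  finally have 1: "pr M ((\<lambda>v. v \<notin> G) \<circ> V) True = (\<Sum>v\<in>V`space M - G. pr M V v)" .
  have "((\<lambda>v. v \<notin> G) \<circ> V) -` {True} \<inter> space M = {x \<in> space M. V x \<notin> G}" unfolding vimage_def comp_def by blast
  then have "pr M ((\<lambda>v. v \<notin> G) \<circ> V) True = prob {x \<in> space M. V x \<notin> G}" unfolding pr_def by (simp only:)
  then show ?thesis using 1 by simp
qed

lemma ent_split:
  fixes G
  assumes V: "simple_function M V"
  defines "sb \<equiv> prob {x \<in> space M. V x \<notin> G}"
  shows "ent M V \<le> (1 - sb) * ln (real (card (V`space M \<inter> G))) - (1 - sb) * ln (1 - sb)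
            + sb * ln (real (card (V`space M - G))) - sb * ln sb"
proof -
  have fin: "finite (V`space M)" by (rule simple_functionD(1)[OF V])
  have sb: "sb = (\<Sum>v\<in>V`space M - G. pr M V v)" unfolding sb_def by (rule pr_notin[OF V])
  have tot: "(\<Sum>v\<in>V`space M \<inter> G. pr M V v) + (\<Sum>v\<in>V`space M - G. pr M V v) = 1"
  proof -
    have u: "(V`space M \<inter> G) \<union> (V`space M - G) = V`space M" by blast
    have "(\<Sum>v\<in>(V`space M \<inter> G) \<union> (V`space M - G). pr M V v) = (\<Sum>v\<in>V`space M \<inter> G. pr M V v) + (\<Sum>v\<in>V`space M - G. pr M V v)"
      by (rule sum.union_disjoint) (use fin in auto)
    then show ?thesis unfolding u using sum_pr_space[OF V] by simp
  qed
  then have sg: "(\<Sum>v\<in>V`space M \<inter> G. pr M V v) = 1 - sb" using sb by simp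
  have "ent M V = - (\<Sum>v\<in>V`space M \<inter> G. pr M V v * ln (pr M V v)) - (\<Sum>v\<in>V`space M - G. pr M V v * ln (pr M V v))"
  proof -
    have u: "(V`space M \<inter> G) \<union> (V`space M - G) = V`space M" by blast
    have "(\<Sum>v\<in>(V`space M \<inter> G) \<union> (V`space M - G). pr M V v * ln (pr M V v)) = (\<Sum>v\<in>V`space M \<inter> G. pr M V v * ln (pr M V v)) + (\<Sum>v\<in>V`space M - G. pr M V v * ln (pr M V v))"
      by (rule sum.union_disjoint) (use fin in auto)
    then show ?thesis unfolding u ent_def by simp
  qed
  also have "\<dots> \<le> ((1 - sb) * ln (real (card (V`space M \<inter> G))) - (1 - sb) * ln (1 - sb))
            + (sb * ln (real (card (V`space M - G))) - sb * ln sb)"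
  proof -
    have a: "- (\<Sum>v\<in>V`space M \<inter> G. pr M V v * ln (pr M V v)) \<le> (1 - sb) * ln (real (card (V`space M \<inter> G))) - (1 - sb) * ln (1 - sb)"
      using gibbs_group'[of "V`space M \<inter> G" "pr M V"] fin unfolding sg by (simp add: pr_nonneg)
    have b: "- (\<Sum>v\<in>V`space M - G. pr M V v * ln (pr M V v)) \<le> sb * ln (real (card (V`space M - G))) - sb * ln sb"
      using gibbs_group'[of "V`space M - G" "pr M V"] fin unfolding sb[symmetric] by (simp add: pr_nonneg)
    show ?thesis using a b by linarith
  qed
  finally show ?thesis by simp
qed

end

lemma subadd_iter:
  fixes a :: "nat \<Rightarrow> real"
  assumes sub: "\<And>n k. a (n + k) \<le> a n + a k"
  shows "a (q * N + r) \<le> real q * a N + a r"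
proof (induction q)
  case 0 then show ?case by simp
next
  case (Suc q)
  have "a (Suc q * N + r) = a (N + (q * N + r))" by (simp add: algebra_simps)
  also have "\<dots> \<le> a N + a (q * N + r)" by (rule sub)
  also have "\<dots> \<le> a N + (real q * a N + a r)" using Suc by simp
  finally show ?case by (simp add: algebra_simps)
qed

lemma fekete:
  fixes a :: "nat \<Rightarrow> real"
  assumes sub: "\<And>n k. a (n + k) \<le> a n + a k" and nn: "\<And>n. 0 \<le> a n"
  shows "convergent (\<lambda>n. a (Suc n) / real (Suc n))"
    and "\<And>N. N \<ge> 1 \<Longrightarrow> lim (\<lambda>n. a (Suc n) / real (Suc n)) \<le> a N / real N"
proof -
  define L where "L = (INF n\<in>{1..}. a n / real n)"
  have bdd: "bdd_below ((\<lambda>n. a n / real n) ` {1..})"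
    by (rule bdd_belowI[where m=0]) (auto simp: nn)
  have Lle: "L \<le> a n / real n" if "n \<ge> 1" for n
    unfolding L_def using that bdd by (intro cINF_lower) auto
  have ev: "\<forall>\<^sub>F n in sequentially. a (Suc n) / real (Suc n) < L + e" if e: "e > 0" for e
  proof -
    have "\<exists>N\<in>{1..}. a N / real N < L + e/2"
    proof (rule ccontr)
      assume "\<not> ?thesis"
      then have "\<forall>N\<in>{1..}. L + e/2 \<le> a N / real N" by force
      then have "L + e/2 \<le> L" unfolding L_def by (intro cINF_greatest) auto
      then show False using e by simp
    qed
    then obtain N where N1: "N \<ge> 1" and N: "a N / real N < L + e/2" by auto
    define C where "C = (\<Sum>r<N. a r)"
    have C: "a r \<le> C" if "r < N" for r
      unfolding C_def using that by (intro member_le_sum) (auto simp: nn)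
    have C0: "0 \<le> C" unfolding C_def by (intro sum_nonneg) (auto simp: nn)
    have "\<forall>\<^sub>F n in sequentially. C / real (Suc n) < e/2"
    proof -
      have "(\<lambda>n. C / real (Suc n)) \<longlonglongrightarrow> 0"
        using tendsto_mult[OF tendsto_const[of C] LIMSEQ_inverse_real_of_nat] by (simp add: divide_inverse)
      then have "\<forall>u>0. \<forall>\<^sub>F n in sequentially. C / real (Suc n) < u" by (auto simp: order_tendsto_iff)
      then show ?thesis using e by (metis half_gt_zero)
    qed
    then show ?thesis
    proof eventually_elim
      case (elim n)
      define q where "q = Suc n div N"
      define r where "r = Suc n mod N"
      have nq: "Suc n = q * N + r" unfolding q_def r_def by simp
      have rN: "r < N" unfolding r_def using N1 by simp
      have "a (Suc n) \<le> real q * a N + a r" unfolding nq by (rule subadd_iter[OF sub])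
      also have "\<dots> \<le> real q * a N + C" using C[OF rN] by simp
      finally have le1: "a (Suc n) \<le> real q * a N + C" .
      have 1: "a (Suc n) / real (Suc n) \<le> (real q * a N) / real (Suc n) + C / real (Suc n)"
        using divide_right_mono[OF le1, of "real (Suc n)"] by (simp add: add_divide_distrib)
      have qN: "real q * real N \<le> real (Suc n)" unfolding nq by (simp del: of_nat_Suc)
      have aN: "0 \<le> a N / real N" using nn[of N] by simp
      have "real q * a N = (real q * real N) * (a N / real N)" using N1 by simp
      also have "\<dots> \<le> real (Suc n) * (a N / real N)" by (rule mult_right_mono[OF qN aN])
      finally have "(real q * a N) / real (Suc n) \<le> a N / real N"
        by (simp add: pos_divide_le_eq mult.commute del: of_nat_Suc)
      then show ?case using 1 elim N by linarith
    qed
  qed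
  have lim: "(\<lambda>n. a (Suc n) / real (Suc n)) \<longlonglongrightarrow> L"
  proof (rule order_tendstoI)
    fix y assume "y < L"
    then show "\<forall>\<^sub>F n in sequentially. y < a (Suc n) / real (Suc n)"
      using Lle[of "Suc _"] by (auto intro: always_eventually less_le_trans)
  next
    fix y assume "L < y"
    then show "\<forall>\<^sub>F n in sequentially. a (Suc n) / real (Suc n) < y"
      using ev[of "y - L"] by simp
  qed
  then show "convergent (\<lambda>n. a (Suc n) / real (Suc n))" by (auto simp: convergent_def)
  show "lim (\<lambda>n. a (Suc n) / real (Suc n)) \<le> a N / real N" if "N \<ge> 1" for N
    using limI[OF lim] Lle[OF that] by simp
qed

definition Xn :: "('a \<Rightarrow> 'a) \<Rightarrow> ('a \<Rightarrow> 'b) \<Rightarrow> nat \<Rightarrow> 'a \<Rightarrow> 'b list" where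
  "Xn T X n x = map (\<lambda>i. X ((T ^^ i) x)) [0..<n]"

lemma Xn_Suc: "Xn T X (Suc n) x = Xn T X n x @ [X ((T ^^ n) x)]"
  by (simp add: Xn_def)

lemma Xn_add: "Xn T X (n + k) x = Xn T X n x @ Xn T X k ((T ^^ n) x)"
proof (induction k)
  case 0 then show ?case by (simp add: Xn_def)
next
  case (Suc k)
  have "(T ^^ (n + k)) x = (T ^^ k) ((T ^^ n) x)" by (simp add: funpow_add add.commute)
  then show ?case using Suc by (simp add: Xn_Suc)
qed

context prob_space
begin

lemma sf_Xn:
  assumes T: "T \<in> measurable M M" and X: "simple_function M X"
  shows "simple_function M (Xn T X n)"
proof (induction n)
  case 0 then show ?case by (simp add: Xn_def)
next
  case (Suc n)
  have a: "simple_function M (\<lambda>x. X ((T ^^ n) x))"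
    by (rule simple_function_comp[OF measurable_compose_n[OF T] X])
  have "simple_function M ((\<lambda>(u,v). u @ [v]) \<circ> (\<lambda>x. (Xn T X n x, X ((T ^^ n) x))))"
    by (intro simple_function_compose simple_function_Pair Suc a)
  moreover have "((\<lambda>(u,v). u @ [v]) \<circ> (\<lambda>x. (Xn T X n x, X ((T ^^ n) x)))) = Xn T X (Suc n)"
    by (simp add: fun_eq_iff Xn_Suc)
  ultimately show ?case by simp
qed

lemma ent_Xn_subadd:
  assumes T: "mpres M T" and X: "simple_function M X"
  shows "ent M (Xn T X (n + k)) \<le> ent M (Xn T X n) + ent M (Xn T X k)"
proof -
  have Tm: "T \<in> measurable M M" using T by (simp add: mpres_def)
  have s1: "simple_function M (Xn T X n)" by (rule sf_Xn[OF Tm X])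
  have s2: "simple_function M (Xn T X k \<circ> T ^^ n)"
    using simple_function_comp[OF measurable_compose_n[OF Tm] sf_Xn[OF Tm X]] by (simp add: comp_def)
  have "ent M (Xn T X (n + k)) = ent M ((\<lambda>(u,v). u @ v) \<circ> (\<lambda>x. (Xn T X n x, (Xn T X k \<circ> T ^^ n) x)))"
    by (rule ent_cong) (simp add: Xn_add)
  also have "\<dots> \<le> ent M (\<lambda>x. (Xn T X n x, (Xn T X k \<circ> T ^^ n) x))"
    by (rule ent_comp_le) (intro simple_function_Pair s1 s2)
  also have "\<dots> \<le> ent M (Xn T X n) + ent M (Xn T X k \<circ> T ^^ n)"
    by (rule ent_pair_le[OF s1 s2])
  also have "ent M (Xn T X k \<circ> T ^^ n) = ent M (Xn T X k)"
    by (rule ent_mpres[OF mpres_funpow[OF T] sf_Xn[OF Tm X]])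
  finally show ?thesis .
qed

lemma key_ineq:
  fixes X :: "'a \<Rightarrow> 'b" and Xp :: "'a \<Rightarrow> 'b" and W :: "'a \<Rightarrow> 'c"
  assumes T: "mpres M T" and X: "simple_function M X" and Xp: "simple_function M Xp"
    and W: "simple_function M W"
    and g: "\<And>i. i < n \<Longrightarrow> \<exists>g. \<forall>x\<in>space M. Xp ((T ^^ i) x) = g (W x)"
  shows "ent M (Xn T X n) \<le> ent M W + real n * ent M (\<lambda>x. if X x = Xp x then None else Some (X x))"
proof -
  define U where "U = (\<lambda>x. if X x = Xp x then None else Some (X x))"
  have Tm: "T \<in> measurable M M" using T by (simp add: mpres_def)
  have sU: "simple_function M U"
  proof -
    have "simple_function M ((\<lambda>(a,b). if a = b then None else Some a) \<circ> (\<lambda>x. (X x, Xp x)))"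
      by (intro simple_function_compose simple_function_Pair X Xp)
    then show ?thesis unfolding U_def by (simp add: comp_def)
  qed
  have sXj: "simple_function M (\<lambda>x. X ((T ^^ j) x))" for j
    by (rule simple_function_comp[OF measurable_compose_n[OF Tm] X])
  have sUj: "simple_function M (\<lambda>x. U ((T ^^ j) x))" for j
    by (rule simple_function_comp[OF measurable_compose_n[OF Tm] sU])
  have sXn: "simple_function M (Xn T X j)" for j by (rule sf_Xn[OF Tm X])
  have step: "ent M (\<lambda>x. (Xn T X j x, W x)) \<le> ent M W + real j * ent M U" if "j \<le> n" for j
    using that
  proof (induction j)
    case 0
    have "(\<lambda>x. (Xn T X 0 x, W x)) = (\<lambda>w. ([] :: 'b list, w)) \<circ> W" by (simp add: Xn_def fun_eq_iff)
    then have "ent M (\<lambda>x. (Xn T X 0 x, W x)) = ent M ((\<lambda>w. ([] :: 'b list, w)) \<circ> W)" by simp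
    also have "\<dots> = ent M W" by (rule ent_inj[OF W]) (simp add: inj_on_def)
    finally show ?case by simp
  next
    case (Suc j)
    then have jn: "j < n" by simp
    obtain gj where gj: "\<And>x. x \<in> space M \<Longrightarrow> Xp ((T ^^ j) x) = gj (W x)" using g[OF jn] by blast
    have "ent M (\<lambda>x. (X ((T ^^ j) x), Xn T X j x, W x)) + ent M W
        \<le> ent M (\<lambda>x. (X ((T ^^ j) x), W x)) + ent M (\<lambda>x. (Xn T X j x, W x))"
      by (rule ssa[OF sXj sXn W])
    moreover have "ent M (\<lambda>x. (Xn T X (Suc j) x, W x)) = ent M (\<lambda>x. (X ((T ^^ j) x), Xn T X j x, W x))"
    proof -
      have "ent M (\<lambda>x. (Xn T X (Suc j) x, W x)) = ent M ((\<lambda>(a,u,w). (u @ [a], w)) \<circ> (\<lambda>x. (X ((T ^^ j) x), Xn T X j x, W x)))"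
        by (rule ent_cong) (simp add: Xn_Suc)
      also have "\<dots> = ent M (\<lambda>x. (X ((T ^^ j) x), Xn T X j x, W x))"
        by (rule ent_inj) (auto intro!: simple_function_Pair sXj sXn W simp: inj_on_def)
      finally show ?thesis .
    qed
    moreover have "ent M (\<lambda>x. (X ((T ^^ j) x), W x)) \<le> ent M U + ent M W"
    proof -
      have "ent M (\<lambda>x. (X ((T ^^ j) x), W x)) =
          ent M ((\<lambda>(u,w). (case u of None \<Rightarrow> gj w | Some a \<Rightarrow> a, w)) \<circ> (\<lambda>x. (U ((T ^^ j) x), W x)))"
        by (rule ent_cong) (simp add: U_def gj)
      also have "\<dots> \<le> ent M (\<lambda>x. (U ((T ^^ j) x), W x))"
        by (rule ent_comp_le) (intro simple_function_Pair sUj W)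
      also have "\<dots> \<le> ent M (\<lambda>x. U ((T ^^ j) x)) + ent M W"
        by (rule ent_pair_le[OF sUj W])
      also have "ent M (\<lambda>x. U ((T ^^ j) x)) = ent M U"
        using ent_mpres[OF mpres_funpow[OF T] sU, of j] by (simp add: comp_def)
      finally show ?thesis .
    qed
    ultimately show ?case using Suc.IH[OF Suc_leD[OF Suc.prems]] by (simp add: algebra_simps)
  qed
  have "ent M (Xn T X n) = ent M (fst \<circ> (\<lambda>x. (Xn T X n x, W x)))" by (simp add: comp_def)
  also have "\<dots> \<le> ent M (\<lambda>x. (Xn T X n x, W x))"
    by (rule ent_comp_le) (intro simple_function_Pair sXn W)
  also have "\<dots> \<le> ent M W + real n * ent M U" by (rule step) simp
  finally show ?thesis unfolding U_def .
qed

lemma minus_xlnx_le_sqrt: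
  fixes s :: real assumes "0 \<le> s" shows "- (s * ln s) \<le> 2 * sqrt s"
proof (cases "s = 0")
  case False
  then have s: "s > 0" using assms by simp
  have "ln (1 / sqrt s) \<le> 1 / sqrt s - 1" using s by (intro ln_le_minus_one) simp
  moreover have "ln (1 / sqrt s) = - ln s / 2" using s by (simp add: ln_div ln_sqrt)
  ultimately have "- ln s \<le> 2 / sqrt s" by simp
  then have "s * (- ln s) \<le> s * (2 / sqrt s)" using s by (intro mult_left_mono) auto
  also have "s * (2 / sqrt s) = 2 * sqrt s" using s
    by (metis divide_divide_eq_right mult.commute real_div_sqrt times_divide_eq_right less_eq_real_def)
  finally show ?thesis by simp
qed simp

lemma one_minus_ln_le:
  fixes s :: real assumes "0 \<le> s" "s \<le> 1" shows "- ((1 - s) * ln (1 - s)) \<le> s"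
proof (cases "s = 1")
  case False
  then have p: "1 - s > 0" using assms by simp
  have "ln (1 / (1 - s)) \<le> 1 / (1 - s) - 1" using p by (intro ln_le_minus_one) simp
  then have "- ln (1 - s) \<le> s / (1 - s)" using p by (simp add: ln_div field_simps)
  then have "(1 - s) * (- ln (1 - s)) \<le> (1 - s) * (s / (1 - s))" using p by (intro mult_left_mono) auto
  then show ?thesis using p by simp
qed simp

lemma ent_U_bound:
  fixes X Xp :: "'a \<Rightarrow> 'b"
  assumes X: "simple_function M X" and Xp: "simple_function M Xp"
  defines "s \<equiv> prob {x \<in> space M. X x \<noteq> Xp x}"
  shows "ent M (\<lambda>x. if X x = Xp x then None else Some (X x)) \<le> s + s * ln (real (card (X ` space M))) + 2 * sqrt s"
proof -
  define U where "U = (\<lambda>x. if X x = Xp x then None else Some (X x))"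
  have sU: "simple_function M U"
  proof -
    have "simple_function M ((\<lambda>(a,b). if a = b then None else Some a) \<circ> (\<lambda>x. (X x, Xp x)))"
      by (intro simple_function_compose simple_function_Pair X Xp)
    then show ?thesis unfolding U_def by (simp add: comp_def)
  qed
  have sdef: "prob {x \<in> space M. U x \<notin> {None}} = s" unfolding s_def U_def by (intro arg_cong[where f=prob]) auto
  have s01: "0 \<le> s" "s \<le> 1" by (auto simp: s_def)
  have "card (U ` space M \<inter> {None}) \<le> card {None :: 'b option}" by (rule card_mono) auto
  then have c1: "card (U ` space M \<inter> {None}) \<le> 1" by simp
  have c1': "ln (real (card (U ` space M \<inter> {None}))) = 0"
    using c1 by (cases "card (U ` space M \<inter> {None})") auto
  have sub: "U ` space M - {None} \<subseteq> Some ` X ` space M" unfolding U_def by auto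
  have cb: "card (U ` space M - {None}) \<le> card (X ` space M)"
    using card_mono[OF _ sub] simple_functionD(1)[OF X] card_image_le[of "X ` space M" Some] by fastforce
  have lncb: "s * ln (real (card (U ` space M - {None}))) \<le> s * ln (real (card (X ` space M)))"
  proof (cases "card (U ` space M - {None}) = 0")
    case True
    have "0 \<le> ln (real (card (X ` space M)))" if "card (X ` space M) > 0" using that by simp
    then show ?thesis using True s01 by (cases "card (X ` space M) = 0") auto
  next
    case False then show ?thesis using cb s01 by (intro mult_left_mono) auto
  qed
  have "ent M U \<le> (1 - s) * ln (real (card (U ` space M \<inter> {None}))) - (1 - s) * ln (1 - s)
            + s * ln (real (card (U ` space M - {None}))) - s * ln s"
    using ent_split[OF sU, of "{None}"] unfolding sdef .
  also have "\<dots> \<le> s + s * ln (real (card (X ` space M))) + 2 * sqrt s"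
    using c1' one_minus_ln_le[OF s01] minus_xlnx_le_sqrt[OF s01(1)] lncb by simp
  finally show ?thesis unfolding U_def .
qed

end

definition win :: "int \<Rightarrow> nat \<Rightarrow> (int \<Rightarrow> int) \<Rightarrow> int list" where
  "win a L x = map (\<lambda>t. x (a + int t)) [0..<L]"

lemma length_win[simp]: "length (win a L x) = L" by (simp add: win_def)

lemma win_nth: "t < L \<Longrightarrow> win a L x ! t = x (a + int t)" by (simp add: win_def)

lemma win_add: "win a (j + L) x = win a j x @ win (a + int j) L x"
  by (rule nth_equalityI) (auto simp: win_nth nth_append algebra_simps)

lemma win_take_drop:
  assumes "d + l \<le> L" shows "take l (drop d (win a L x)) = win (a + int d) l x"
  using assms by (intro nth_equalityI) (auto simp: win_nth algebra_simps)

lemma shift_pow: "(shift ^^ i) x = (\<lambda>j. x (j + int i))"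
proof (induction i)
  case 0 then show ?case by simp
next
  case (Suc i) then show ?case by (simp add: shift_def algebra_simps)
qed

lemma win_shift: "win a L ((shift ^^ i) x) = win (a + int i) L x"
  by (rule nth_equalityI) (auto simp: win_nth shift_pow algebra_simps)

definition blk :: "(nat \<Rightarrow> int) \<Rightarrow> nat \<Rightarrow> int list" where
  "blk d j = map (\<lambda>t. d (t + 1)) [0..<j]"

lemma length_blk[simp]: "length (blk d j) = j" by (simp add: blk_def)

function goodw :: "(nat \<Rightarrow> int) \<Rightarrow> nat \<Rightarrow> int list set" where
  "goodw d m = (if m = 0 then {[]} else insert (blk d m)
      (\<Union>t\<in>{..<m div 2}. (\<lambda>v. blk d (2 * t + 1) @ v) ` goodw d (m - (2 * t + 1))))"
  by pat_completeness auto
termination by (relation "inv_image less_than snd") auto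

declare goodw.simps[simp del]

definition phi :: real where "phi = (1 + sqrt 5) / 2"

lemma phi_ge1: "1 \<le> phi" unfolding phi_def
  using real_sqrt_ge_one[of 5] by simp

lemma phi_sq: "phi ^ 2 = phi + 1"
  unfolding phi_def by (simp add: power2_eq_square field_simps)

lemma phi_sum: "1 + (\<Sum>t<m div 2. phi ^ (m - (2 * t + 1))) \<le> phi ^ m"
proof (induction m rule: nat_less_induct)
  case (1 m)
  show ?case
  proof (cases m)
    case 0 then show ?thesis by simp
  next
    case (Suc k)
    show ?thesis
    proof (cases k)
      case 0 then show ?thesis using Suc phi_ge1 by simp
    next
      case (Suc k')
      have m: "m = Suc (Suc k')" using \<open>m = Suc k\<close> Suc by simp
      have d: "m div 2 = Suc (k' div 2)" using m by simp
      have "(\<Sum>t<m div 2. phi ^ (m - (2 * t + 1))) = phi ^ (m - 1) + (\<Sum>t<k' div 2. phi ^ (m - (2 * Suc t + 1)))"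
        unfolding d by (subst sum.lessThan_Suc_shift) simp
      also have "(\<Sum>t<k' div 2. phi ^ (m - (2 * Suc t + 1))) = (\<Sum>t<k' div 2. phi ^ (k' - (2 * t + 1)))"
        using m by (intro sum.cong) auto
      finally have e: "(\<Sum>t<m div 2. phi ^ (m - (2 * t + 1))) = phi ^ Suc k' + (\<Sum>t<k' div 2. phi ^ (k' - (2 * t + 1)))"
        using m by simp
      have ih: "1 + (\<Sum>t<k' div 2. phi ^ (k' - (2 * t + 1))) \<le> phi ^ k'" using "1" m by simp
      have "phi ^ m = phi ^ k' * phi ^ 2" using m by (simp add: power_add[symmetric])
      also have "\<dots> = phi ^ Suc k' + phi ^ k'" by (simp add: phi_sq algebra_simps)
      finally show ?thesis using e ih by simp
    qed
  qed
qed

lemma goodw_finite: "finite (goodw d m)"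
proof (induction m rule: nat_less_induct)
  case (1 m)
  then show ?case by (subst goodw.simps) auto
qed

lemma goodw_card: "real (card (goodw d m)) \<le> phi ^ m"
proof (induction m rule: nat_less_induct)
  case (1 m)
  show ?case
  proof (cases "m = 0")
    case True then show ?thesis by (simp add: goodw.simps)
  next
    case False
    define U where "U = (\<Union>t\<in>{..<m div 2}. (\<lambda>v. blk d (2 * t + 1) @ v) ` goodw d (m - (2 * t + 1)))"
    have g: "goodw d m = insert (blk d m) U" using False unfolding U_def by (simp add: goodw.simps)
    have "card (goodw d m) \<le> Suc (card U)" unfolding g by (rule card_insert_le_m1) simp_all
    moreover have "card U \<le> (\<Sum>t<m div 2. card ((\<lambda>v. blk d (2 * t + 1) @ v) ` goodw d (m - (2 * t + 1))))"
      unfolding U_def by (rule card_UN_le) simp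
    moreover have "card ((\<lambda>v. blk d (2 * t + 1) @ v) ` goodw d (m - (2 * t + 1))) \<le> card (goodw d (m - (2 * t + 1)))" for t
      by (rule card_image_le[OF goodw_finite])
    ultimately have "card (goodw d m) \<le> Suc (\<Sum>t<m div 2. card (goodw d (m - (2 * t + 1))))"
      by (meson Suc_le_mono order_trans sum_mono)
    then have "real (card (goodw d m)) \<le> 1 + (\<Sum>t<m div 2. real (card (goodw d (m - (2 * t + 1)))))"
      by (metis of_nat_Suc of_nat_le_iff of_nat_sum add.commute)
    also have "\<dots> \<le> 1 + (\<Sum>t<m div 2. phi ^ (m - (2 * t + 1)))"
      using "1" False by (intro add_left_mono sum_mono) auto
    also have "\<dots> \<le> phi ^ m" by (rule phi_sum)
    finally show ?thesis .
  qed
qed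

definition goodset :: "(nat \<Rightarrow> int) \<Rightarrow> int set \<Rightarrow> nat \<Rightarrow> nat \<Rightarrow> int list set" where
  "goodset d A L e = {w. length w = L \<and> set w \<subseteq> A \<and> (\<exists>i<e. drop i w \<in> goodw d (L - i))}"

lemma goodset_card:
  assumes A: "finite A" "A \<noteq> {}"
  shows "real (card (goodset d A L e)) \<le> real e * real (card A) ^ e * phi ^ L"
proof -
  define F where "F i = (\<lambda>(u,v). u @ v) ` ({u. set u \<subseteq> A \<and> length u = min i L} \<times> goodw d (L - i))" for i
  have sub: "goodset d A L e \<subseteq> (\<Union>i<e. F i)"
  proof
    fix w assume "w \<in> goodset d A L e"
    then obtain i where i: "i < e" "drop i w \<in> goodw d (L - i)" and w: "length w = L" "set w \<subseteq> A"
      by (auto simp: goodset_def)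
    have "take i w \<in> {u. set u \<subseteq> A \<and> length u = min i L}" using w set_take_subset[of i w] by auto
    then have "w \<in> F i" unfolding F_def using i
      by (intro image_eqI[where x="(take i w, drop i w)"]) auto
    then show "w \<in> (\<Union>i<e. F i)" using i by auto
  qed
  have finF: "finite (F i)" for i
    unfolding F_def using A by (intro finite_imageI finite_cartesian_product finite_lists_length_eq goodw_finite)
  have cA: "1 \<le> real (card A)" using A by (simp add: Suc_le_eq card_gt_0_iff)
  have cF: "real (card (F i)) \<le> real (card A) ^ e * phi ^ L" if "i < e" for i
  proof -
    have "card (F i) \<le> card ({u. set u \<subseteq> A \<and> length u = min i L} \<times> goodw d (L - i))"
      unfolding F_def by (rule card_image_le) (use A in \<open>intro finite_cartesian_product finite_lists_length_eq goodw_finite\<close>)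
    also have "\<dots> = card A ^ (min i L) * card (goodw d (L - i))"
      using A by (simp add: card_cartesian_product card_lists_length_eq)
    finally have "real (card (F i)) \<le> real (card A) ^ (min i L) * real (card (goodw d (L - i)))"
      by (metis of_nat_le_iff of_nat_mult of_nat_power)
    also have "\<dots> \<le> real (card A) ^ e * phi ^ L"
    proof (rule mult_mono)
      show "real (card A) ^ min i L \<le> real (card A) ^ e" using cA that by (intro power_increasing) auto
      show "real (card (goodw d (L - i))) \<le> phi ^ L"
        using goodw_card[of d "L - i"] power_increasing[of "L - i" L phi] phi_ge1 by linarith
    qed (use cA in auto)
    finally show ?thesis .
  qed
  have "real (card (goodset d A L e)) \<le> real (card (\<Union>i<e. F i))"
    using sub finF by (intro of_nat_mono card_mono) auto
  also have "\<dots> \<le> (\<Sum>i<e. real (card (F i)))"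
    using card_UN_le[of "{..<e}" F] by (metis finite_lessThan of_nat_le_iff of_nat_sum)
  also have "\<dots> \<le> (\<Sum>i<e. real (card A) ^ e * phi ^ L)" by (intro sum_mono cF) simp
  also have "\<dots> = real e * real (card A) ^ e * phi ^ L" by simp
  finally show ?thesis .
qed

lemma parse_goodw:
  fixes c :: "int \<Rightarrow> int" and x :: "int \<Rightarrow> int"
  assumes c: "strict_mono c" and odd: "\<And>k. odd (c (k + 1) - c k)"
    and xc: "\<And>k j. 0 \<le> j \<Longrightarrow> j < c (k + 1) - c k \<Longrightarrow> x (c k + j) = d (nat j + 1)"
  shows "win (c k) L x \<in> goodw d L"
proof (induction L arbitrary: k rule: nat_less_induct)
  case (1 L)
  show ?case
  proof (cases "L = 0")
    case True then show ?thesis by (simp add: goodw.simps win_def)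
  next
    case False
    define j where "j = c (k + 1) - c k"
    have jpos: "j > 0" unfolding j_def using c by (simp add: strict_mono_def)
    show ?thesis
    proof (cases "int L \<le> j")
      case True
      have "win (c k) L x = blk d L"
      proof (rule nth_equalityI)
        fix t assume "t < length (win (c k) L x)"
        then have t: "t < L" by simp
        have "x (c k + int t) = d (nat (int t) + 1)" using xc[of "int t" k] t True unfolding j_def by simp
        then show "win (c k) L x ! t = blk d L ! t" using t by (simp add: win_nth blk_def)
      qed simp
      then show ?thesis using False by (subst goodw.simps) simp
    next
      case False': False
      define jn where "jn = nat j"
      have jn: "int jn = j" "jn < L" "odd jn" using jpos False' odd[of k] unfolding jn_def j_def
        by (auto simp: even_nat_iff)
      define t where "t = jn div 2"
      have jt: "jn = 2 * t + 1" using jn(3) unfolding t_def by presburger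
      have tL: "t < L div 2" using jn(2) jt by linarith
      have split: "win (c k) L x = win (c k) jn x @ win (c k + int jn) (L - jn) x"
        using win_add[of "c k" jn "L - jn" x] jn(2) by simp
      have b: "win (c k) jn x = blk d jn"
      proof (rule nth_equalityI)
        fix s assume "s < length (win (c k) jn x)"
        then have s: "s < jn" by simp
        have "x (c k + int s) = d (nat (int s) + 1)" using xc[of "int s" k] s jn(1) unfolding j_def by simp
        then show "win (c k) jn x ! s = blk d jn ! s" using s by (simp add: win_nth blk_def)
      qed simp
      have ck: "c k + int jn = c (k + 1)" using jn(1) unfolding j_def by simp
      have ih: "win (c (k + 1)) (L - jn) x \<in> goodw d (L - jn)"
        using "1" jn jpos by simp
      have "win (c k) L x \<in> (\<lambda>v. blk d (2 * t + 1) @ v) ` goodw d (L - (2 * t + 1))"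
        using split b ck ih jt by auto
      then show ?thesis using False tL by (subst goodw.simps) auto
    qed
  qed
qed

lemma strict_mono_int_unbounded:
  fixes c :: "int \<Rightarrow> int" assumes c: "strict_mono c"
  shows "\<exists>k. c k \<ge> 0"
proof -
  have "c (int n) \<ge> c 0 + int n" for n
  proof (induction n)
    case 0 then show ?case by simp
  next
    case (Suc n)
    have "c (int n) < c (1 + int n)" using c by (simp add: strict_mono_def)
    then show ?case using Suc by simp
  qed
  then have "c (int (nat \<bar>c 0\<bar>)) \<ge> c 0 + \<bar>c 0\<bar>" by (metis abs_ge_zero int_nat_eq)
  then have "c (int (nat \<bar>c 0\<bar>)) \<ge> 0" by linarith
  then show ?thesis by blast
qed

lemma D_parse:
  assumes "x \<in> D_set \<beta>"
  shows "\<exists>i::nat. \<forall>L. win (int i) L x \<in> goodw (dseq \<beta>) L"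
proof -
  obtain c :: "int \<Rightarrow> int" where c: "strict_mono c" and odd: "\<And>k. odd (c (k + 1) - c k)"
    and xc: "\<And>k j. 0 \<le> j \<Longrightarrow> j < c (k + 1) - c k \<Longrightarrow> x (c k + j) = dseq \<beta> (nat j + 1)"
    using assms unfolding D_set_def by blast
  obtain k where k: "c k \<ge> 0" using strict_mono_int_unbounded[OF c] by blast
  have "win (c k) L x \<in> goodw (dseq \<beta>) L" for L
    by (rule parse_goodw[where c=c and x=x and d="dseq \<beta>"]) (use c odd xc in auto)
  then show ?thesis using k by (intro exI[where x="nat (c k)"]) auto
qed

locale nbs =
  fixes \<beta> :: real and m :: "(int \<Rightarrow> int) measure"
  assumes sip: "shift_inv_prob \<beta> m"
begin

lemma ps: "prob_space m" using sip by (simp add: shift_inv_prob_def)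

sublocale prob_space m by (rule ps)

lemma space_m: "space m = S_beta \<beta>" using sip by (simp add: shift_inv_prob_def)

lemma sets_m: "sets m = sets (S_meas \<beta>)" using sip by (simp add: shift_inv_prob_def)

lemma mpres_shift: "mpres m shift" using sip unfolding shift_inv_prob_def mpres_def by blast

lemma shift_meas: "shift \<in> measurable m m" using mpres_shift by (simp add: mpres_def)

lemma finite_alph: "finite (alphabet \<beta>)" by (simp add: alphabet_def)

lemma alph_ne: "alphabet \<beta> \<noteq> {}" by (simp add: alphabet_def)

lemma coord_meas: "(\<lambda>x. x i) \<in> measurable m (count_space UNIV)"
proof -
  have "(\<lambda>x. x i) \<in> measurable (PiM UNIV (\<lambda>_. count_space (UNIV :: int set))) (count_space UNIV)"
    using measurable_component_singleton[of i UNIV "\<lambda>_. count_space (UNIV :: int set)"] by simp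
  then have "(\<lambda>x. x i) \<in> measurable (S_meas \<beta>) (count_space UNIV)"
    unfolding S_meas_def by (rule measurable_restrict_space1)
  then show ?thesis using measurable_cong_sets[OF sets_m refl] by blast
qed

lemma coord_in_alph: "x \<in> space m \<Longrightarrow> x i \<in> alphabet \<beta>"
  by (simp add: space_m S_beta_def)

lemma sf_coord: "simple_function m (\<lambda>x. x i)"
proof -
  have "(\<lambda>x. x i) ` space m \<subseteq> alphabet \<beta>" using coord_in_alph by auto
  then have "finite ((\<lambda>x. x i) ` space m)" using finite_alph finite_subset by blast
  then show ?thesis using coord_meas by (simp add: simple_function_eq_measurable)
qed

lemma sf_win: "simple_function m (win a L)"
proof (induction L)
  case 0 then show ?case by (simp add: win_def)
next
  case (Suc L)
  have "simple_function m ((\<lambda>(u,c). u @ [c]) \<circ> (\<lambda>x. (win a L x, x (a + int L))))"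
    by (intro simple_function_compose simple_function_Pair Suc sf_coord)
  moreover have "(\<lambda>(u,c). u @ [c]) \<circ> (\<lambda>x. (win a L x, x (a + int L))) = win a (Suc L)"
    by (simp add: fun_eq_iff win_def)
  ultimately show ?case by simp
qed

lemma win_in_alph: "x \<in> space m \<Longrightarrow> set (win a L x) \<subseteq> alphabet \<beta>"
  using coord_in_alph by (auto simp: win_def)

lemma win_sets: "{x \<in> space m. win a L x \<in> E} \<in> sets m"
proof -
  have "win a L -` E \<inter> space m \<in> sets m" by (rule simple_functionD(2)[OF sf_win])
  moreover have "win a L -` E \<inter> space m = {x \<in> space m. win a L x \<in> E}" by blast
  ultimately show ?thesis by simp
qed

definition Cyl :: "nat \<Rightarrow> int list set \<Rightarrow> (int \<Rightarrow> int) set" where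
  "Cyl k E = {x \<in> space m. win (- int k) (2 * k + 1) x \<in> E}"

lemma Cyl_sets: "Cyl k E \<in> sets m" unfolding Cyl_def by (rule win_sets)

lemma win_eq_coord:
  assumes "win (- int k) (2 * k + 1) z = win (- int k) (2 * k + 1) x" "\<bar>i\<bar> \<le> int k"
  shows "z i = x i"
proof -
  define t where "t = nat (i + int k)"
  have t: "t < 2 * k + 1" "- int k + int t = i" using assms(2) unfolding t_def by auto
  have "win (- int k) (2 * k + 1) z ! t = win (- int k) (2 * k + 1) x ! t" using assms(1) by simp
  then show ?thesis using t by (simp add: win_nth)
qed

lemma open_basis:
  assumes U: "open (U :: (int \<Rightarrow> int) set)" and x: "x \<in> U"
  shows "\<exists>k. {z. win (- int k) (2 * k + 1) z = win (- int k) (2 * k + 1) x} \<subseteq> U"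
proof -
  have "openin (product_topology (\<lambda>i. euclidean) UNIV) U" using U by (simp add: open_fun_def)
  from product_topology_open_contains_basis[OF this x] obtain X where
    X: "x \<in> Pi\<^sub>E UNIV X" "finite {i. X i \<noteq> topspace euclidean}" "Pi\<^sub>E UNIV X \<subseteq> U"
    by blast
  define F where "F = {i. X i \<noteq> UNIV}"
  have F: "finite F" using X(2) by (simp add: F_def)
  define k where "k = Max (insert 0 ((\<lambda>i. nat \<bar>i\<bar>) ` F))"
  have kF: "\<bar>i\<bar> \<le> int k" if "i \<in> F" for i
  proof -
    have "nat \<bar>i\<bar> \<le> k" unfolding k_def using F that by (intro Max_ge) auto
    then show ?thesis by linarith
  qed
  have "{z. win (- int k) (2 * k + 1) z = win (- int k) (2 * k + 1) x} \<subseteq> Pi\<^sub>E UNIV X"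
  proof
    fix z assume z: "z \<in> {z. win (- int k) (2 * k + 1) z = win (- int k) (2 * k + 1) x}"
    have "z i \<in> X i" for i
    proof (cases "i \<in> F")
      case True
      then have "z i = x i" using z kF win_eq_coord by blast
      then show ?thesis using X(1) by (auto simp: PiE_UNIV_domain)
    next
      case False then show ?thesis by (simp add: F_def)
    qed
    then show "z \<in> Pi\<^sub>E UNIV X" by (simp add: PiE_UNIV_domain)
  qed
  then show ?thesis using X(3) by blast
qed

lemma open_sets:
  assumes U: "open (U :: (int \<Rightarrow> int) set)"
  shows "U \<inter> space m \<in> sets m"
proof -
  define N where "N = (\<lambda>(k, w). if {z. win (- int k) (2 * k + 1) z = w} \<subseteq> U then Cyl k {w} else {})"
  have "U \<inter> space m = \<Union> (N ` UNIV)"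
  proof
    show "U \<inter> space m \<subseteq> \<Union> (N ` UNIV)"
    proof
      fix x assume x: "x \<in> U \<inter> space m"
      obtain k where k: "{z. win (- int k) (2 * k + 1) z = win (- int k) (2 * k + 1) x} \<subseteq> U"
        using open_basis[OF U] x by blast
      then have "x \<in> N (k, win (- int k) (2 * k + 1) x)" using x by (simp add: N_def Cyl_def)
      then show "x \<in> \<Union> (N ` UNIV)" by blast
    qed
    show "\<Union> (N ` UNIV) \<subseteq> U \<inter> space m"
      by (auto simp: N_def Cyl_def split: if_splits)
  qed
  moreover have "\<Union> (N ` UNIV) \<in> sets m"
    by (rule sets.countable_UN) (auto simp: N_def Cyl_sets)
  ultimately show ?thesis by simp
qed

lemma null_off_support:
  assumes B: "B \<in> sets m" "B \<inter> support m = {}"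
  shows "emeasure m B = 0"
proof -
  define N where "N = (\<lambda>(k, w). if emeasure m (Cyl k {w}) = 0 then Cyl k {w} else {})"
  have sub: "B \<subseteq> \<Union> (range N)"
  proof
    fix x assume x: "x \<in> B"
    then have xs: "x \<in> space m" using sets.sets_into_space[OF B(1)] by blast
    have "x \<notin> support m" using x B(2) by blast
    then obtain U where U: "open U" "x \<in> U" "\<not> emeasure m (U \<inter> space m) > 0"
      using xs unfolding support_def by blast
    then have U0: "emeasure m (U \<inter> space m) = 0" by (simp add: not_less)
    obtain k where k: "{z. win (- int k) (2 * k + 1) z = win (- int k) (2 * k + 1) x} \<subseteq> U"
      using open_basis[OF U(1,2)] by blast
    have "Cyl k {win (- int k) (2 * k + 1) x} \<subseteq> U \<inter> space m" using k by (auto simp: Cyl_def)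
    then have "emeasure m (Cyl k {win (- int k) (2 * k + 1) x}) \<le> emeasure m (U \<inter> space m)"
      by (intro emeasure_mono open_sets U(1))
    then have "emeasure m (Cyl k {win (- int k) (2 * k + 1) x}) = 0" using U0 by simp
    then have "x \<in> N (k, win (- int k) (2 * k + 1) x)" using xs by (simp add: N_def Cyl_def)
    then show "x \<in> \<Union> (range N)" by blast
  qed
  have rN: "range N \<subseteq> sets m" by (auto simp: N_def Cyl_sets)
  have "\<Union> (N ` UNIV) \<in> null_sets m"
    by (rule null_sets_UN') (auto simp: N_def Cyl_sets null_sets_def)
  then have "emeasure m (\<Union> (range N)) = 0" by auto
  then show ?thesis using emeasure_mono[OF sub sets.countable_UN[OF rN]] by simp
qed

end

context nbs
begin

definition lift :: "nat \<Rightarrow> nat \<Rightarrow> int list set \<Rightarrow> int list set" where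
  "lift K k E = {w. take (2 * k + 1) (drop (K - k) w) \<in> E}"

lemma Cyl_lift: assumes "k \<le> K" shows "Cyl K (lift K k E) = Cyl k E"
proof -
  have "take (2 * k + 1) (drop (K - k) (win (- int K) (2 * K + 1) x)) = win (- int k) (2 * k + 1) x" for x
    using win_take_drop[of "K - k" "2 * k + 1" "2 * K + 1" "- int K" x] assms by simp
  then show ?thesis by (simp add: Cyl_def lift_def)
qed

lemma Cyl_UN: "Cyl K (\<Union>i\<in>I. E i) = (\<Union>i\<in>I. Cyl K (E i)) \<inter> space m"
  by (auto simp: Cyl_def)

lemma Cyl_compl: "Cyl k (- E) = space m - Cyl k E" by (auto simp: Cyl_def)

abbreviation sdiff :: "'x set \<Rightarrow> 'x set \<Rightarrow> 'x set" where
  "sdiff A B \<equiv> (A - B) \<union> (B - A)"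

lemma sets_m_restr: "B \<in> sets (PiM UNIV (\<lambda>_. count_space (UNIV :: int set))) \<Longrightarrow> B \<inter> space m \<in> sets m"
  unfolding sets_m S_meas_def sets_restrict_space space_m
  by auto

lemma approx_sigma:
  assumes B: "B \<in> sigma_sets (\<Pi>\<^sub>E i\<in>UNIV. space (count_space (UNIV :: int set)))
     {{f \<in> \<Pi>\<^sub>E i\<in>UNIV. space (count_space (UNIV :: int set)). f i \<in> A} |i A. i \<in> UNIV \<and> A \<in> sets (count_space UNIV)}"
  shows "\<forall>\<eta>>0. \<exists>k E. prob (sdiff (B \<inter> space m) (Cyl k E)) < \<eta>"
  using B
proof induction
  case (Basic a)
  then obtain i A where a: "a = {f \<in> \<Pi>\<^sub>E i\<in>UNIV. space (count_space (UNIV :: int set)). f i \<in> A}" by blast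
  define k where "k = nat \<bar>i\<bar>"
  define E where "E = {w. w ! nat (i + int k) \<in> A}"
  have "win (- int k) (2 * k + 1) x ! nat (i + int k) = x i" for x
    by (subst win_nth) (auto simp: k_def)
  then have "Cyl k E = a \<inter> space m" by (auto simp: Cyl_def E_def a)
  then show ?case by (intro allI impI exI[of _ k] exI[of _ E]) simp
next
  case Empty
  have "Cyl 0 {} = {}" by (simp add: Cyl_def)
  then show ?case by (intro allI impI exI[of _ 0] exI[of _ "{}"]) simp
next
  case (Compl a)
  show ?case
  proof (intro allI impI)
    fix \<eta> :: real assume "\<eta> > 0"
    then obtain k E where kE: "prob (sdiff (a \<inter> space m) (Cyl k E)) < \<eta>" using Compl.IH by blast
    have "sdiff (((\<Pi>\<^sub>E i\<in>UNIV. space (count_space (UNIV :: int set))) - a) \<inter> space m) (Cyl k (- E))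
        = sdiff (a \<inter> space m) (Cyl k E)"
      by (auto simp: Cyl_def)
    then show "\<exists>k E. prob (sdiff (((\<Pi>\<^sub>E i\<in>UNIV. space (count_space (UNIV :: int set))) - a) \<inter> space m) (Cyl k E)) < \<eta>"
      using kE by metis
  qed
next
  case (Union Bs)
  define An where "An n = Bs n \<inter> space m" for n
  have Bs_sets: "Bs n \<in> sets (PiM UNIV (\<lambda>_. count_space (UNIV :: int set)))" for n
    using Union.hyps[of n] by (simp add: sets_PiM_single)
  have An: "An n \<in> sets m" for n unfolding An_def by (rule sets_m_restr[OF Bs_sets])
  define Uf where "Uf N = (\<Union>n<N. An n)" for N
  have Uf: "Uf N \<in> sets m" for N unfolding Uf_def using An by auto
  have inc: "incseq Uf" unfolding Uf_def incseq_def by (auto intro: less_le_trans)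
  have UnU: "(\<Union>N. Uf N) = (\<Union>n. An n)" unfolding Uf_def by blast
  have AU: "(\<Union>n. An n) \<in> sets m" using An by auto
  have lim: "(\<lambda>N. prob (Uf N)) \<longlonglongrightarrow> prob (\<Union>n. An n)"
    using finite_Lim_measure_incseq[of Uf] Uf inc UnU by auto
  show ?case
  proof (intro allI impI)
    fix \<eta> :: real assume eta: "\<eta> > 0"
    have "\<forall>\<^sub>F N in sequentially. prob (\<Union>n. An n) - \<eta>/2 < prob (Uf N)"
      using lim eta by (auto simp: order_tendsto_iff)
    then obtain N1 where N1: "\<And>N. N \<ge> N1 \<Longrightarrow> prob (\<Union>n. An n) - \<eta>/2 < prob (Uf N)"
      by (auto simp: eventually_sequentially)
    define N where "N = Suc N1"
    have N: "prob (\<Union>n. An n) - \<eta>/2 < prob (Uf N)" "N \<ge> 1" using N1[of N] by (auto simp: N_def)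
    have "\<forall>n\<in>{..<N}. \<exists>p. prob (sdiff (An n) (Cyl (fst p) (snd p))) < \<eta> / (2 * real N)"
    proof
      fix n assume "n \<in> {..<N}"
      have pos: "\<eta> / (2 * real N) > 0" using eta N(2) by simp
      obtain k E where "prob (sdiff (Bs n \<inter> space m) (Cyl k E)) < \<eta> / (2 * real N)"
        using Union.IH[of n] pos by blast
      then show "\<exists>p. prob (sdiff (An n) (Cyl (fst p) (snd p))) < \<eta> / (2 * real N)"
        unfolding An_def by (intro exI[of _ "(k, E)"]) simp
    qed
    then obtain p where p: "\<And>n. n < N \<Longrightarrow> prob (sdiff (An n) (Cyl (fst (p n)) (snd (p n)))) < \<eta> / (2 * real N)"
      by (metis lessThan_iff bchoice)
    define K where "K = Max (fst ` p ` {..<N})"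
    have kK: "fst (p n) \<le> K" if "n < N" for n unfolding K_def using that by (intro Max_ge) auto
    define Cn where "Cn n = Cyl (fst (p n)) (snd (p n))" for n
    define E where "E = (\<Union>n\<in>{..<N}. lift K (fst (p n)) (snd (p n)))"
    have CE: "Cyl K E = (\<Union>n<N. Cn n)"
      unfolding E_def Cyl_UN Cn_def using Cyl_lift[OF kK] by (auto simp: Cyl_def)
    have Cn: "Cn n \<in> sets m" for n unfolding Cn_def by (rule Cyl_sets)
    have sub: "sdiff (\<Union>n. An n) (\<Union>n<N. Cn n) \<subseteq> ((\<Union>n. An n) - Uf N) \<union> (\<Union>n<N. sdiff (An n) (Cn n))"
      unfolding Uf_def by blast
    have "prob (sdiff (\<Union>n. An n) (\<Union>n<N. Cn n)) \<le> prob (((\<Union>n. An n) - Uf N) \<union> (\<Union>n<N. sdiff (An n) (Cn n)))"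
      using sub An Cn Uf by (intro finite_measure_mono) auto
    also have "\<dots> \<le> prob ((\<Union>n. An n) - Uf N) + prob (\<Union>n<N. sdiff (An n) (Cn n))"
      using An Cn Uf by (intro measure_Un_le) auto
    also have "prob ((\<Union>n. An n) - Uf N) = prob (\<Union>n. An n) - prob (Uf N)"
      using An Uf by (intro finite_measure_Diff) (auto simp: Uf_def)
    also have "prob (\<Union>n<N. sdiff (An n) (Cn n)) \<le> (\<Sum>n<N. prob (sdiff (An n) (Cn n)))"
      using An Cn by (intro finite_measure_subadditive_finite) auto
    also have "(\<Sum>n<N. prob (sdiff (An n) (Cn n))) < (\<Sum>n<N. \<eta> / (2 * real N))"
      using N(2) p unfolding Cn_def by (intro sum_strict_mono) (auto simp: lessThan_empty_iff)
    also have "(\<Sum>n<N. \<eta> / (2 * real N)) = \<eta> / 2" using N(2) by simp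
    finally have "prob (sdiff (\<Union>n. An n) (Cyl K E)) < \<eta>" using N(1) unfolding CE by simp
    moreover have "(\<Union>n. An n) = (\<Union> (range Bs)) \<inter> space m" unfolding An_def by blast
    ultimately show "\<exists>k E. prob (sdiff (\<Union> (range Bs) \<inter> space m) (Cyl k E)) < \<eta>" by metis
  qed
qed

lemma approx:
  assumes A: "A \<in> sets m" and eta: "\<eta> > 0"
  shows "\<exists>k. \<forall>K\<ge>k. \<exists>E. prob (sdiff A (Cyl K E)) < \<eta>"
proof -
  obtain B where B: "B \<in> sets (PiM UNIV (\<lambda>_. count_space (UNIV :: int set)))" "A = B \<inter> space m"
    using A unfolding sets_m S_meas_def sets_restrict_space space_m
    by auto
  obtain k E where kE: "prob (sdiff (B \<inter> space m) (Cyl k E)) < \<eta>"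
    using approx_sigma[of B] B(1) eta by (auto simp: sets_PiM_single)
  have "\<exists>E. prob (sdiff A (Cyl K E)) < \<eta>" if "K \<ge> k" for K
    using kE B(2) Cyl_lift[OF that] by metis
  then show ?thesis by blast
qed

end

definition cell :: "(int \<Rightarrow> int) set set \<Rightarrow> (int \<Rightarrow> int) \<Rightarrow> (int \<Rightarrow> int) set" where
  "cell P x = (THE A. A \<in> P \<and> x \<in> A)"

context nbs
begin

lemma cell:
  assumes P: "meas_partition m P" and x: "x \<in> space m"
  shows "cell P x \<in> P \<and> x \<in> cell P x"
proof -
  have ex: "\<exists>A. A \<in> P \<and> x \<in> A" using P x unfolding meas_partition_def by blast
  have un: "A = B" if "A \<in> P" "x \<in> A" "B \<in> P" "x \<in> B" for A B
    using P that unfolding meas_partition_def by blast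
  show ?thesis unfolding cell_def by (rule theI') (use ex un in blast)
qed

lemma cell_eq:
  assumes P: "meas_partition m P" and x: "x \<in> space m" and A: "A \<in> P"
  shows "cell P x = A \<longleftrightarrow> x \<in> A"
proof
  assume "cell P x = A" then show "x \<in> A" using cell[OF P x] by simp
next
  assume xA: "x \<in> A"
  have "cell P x \<in> P" "x \<in> cell P x" using cell[OF P x] by auto
  then show "cell P x = A" using P xA A unfolding meas_partition_def by blast
qed

lemma sf_cell:
  assumes P: "meas_partition m P"
  shows "simple_function m (cell P)"
proof -
  have fP: "finite P" and Ps: "P \<subseteq> sets m" using P by (auto simp: meas_partition_def)
  have "cell P ` space m \<subseteq> P" using cell[OF P] by auto
  then have fin: "finite (cell P ` space m)" using fP finite_subset by blast
  have "cell P -` {v} \<inter> space m \<in> sets m" for v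
  proof (cases "v \<in> P")
    case True
    then have "v \<subseteq> space m" using Ps sets.sets_into_space by blast
    then have "cell P -` {v} \<inter> space m = v" using cell_eq[OF P _ True] by auto
    then show ?thesis using True Ps by auto
  next
    case False
    then have "cell P -` {v} \<inter> space m = {}" using cell[OF P] by auto
    then show ?thesis by simp
  qed
  then show ?thesis using fin by (simp add: simple_function_def)
qed

lemma approx_X:
  assumes P: "meas_partition m P" and eta: "\<eta> > 0"
  shows "\<exists>K g. prob {x \<in> space m. cell P x \<noteq> g (win (- int K) (2 * K + 1) x)} < \<eta>"
proof -
  define P' where "P' = cell P ` space m"
  have fP': "finite P'" using sf_cell[OF P] unfolding P'_def by (rule simple_functionD)
  have P'P: "P' \<subseteq> P" unfolding P'_def using cell[OF P] by auto
  have Ps: "A \<in> sets m" if "A \<in> P'" for A using P P'P that by (auto simp: meas_partition_def)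
  have ne: "P' \<noteq> {}" unfolding P'_def using not_empty by simp
  then have cP: "real (card P') > 0" using fP' by (simp add: card_gt_0_iff)
  define \<eta>' where "\<eta>' = \<eta> / real (card P')"
  have eta': "\<eta>' > 0" unfolding \<eta>'_def using eta cP by simp
  have "\<forall>A\<in>P'. \<exists>k. \<forall>K\<ge>k. \<exists>E. prob (sdiff A (Cyl K E)) < \<eta>'"
    using approx[OF Ps eta'] by blast
  from bchoice[OF this] obtain kf where kf: "\<forall>A\<in>P'. \<forall>K\<ge>kf A. \<exists>E. prob (sdiff A (Cyl K E)) < \<eta>'"
    by blast
  define K where "K = Max (kf ` P')"
  have "\<exists>E. prob (sdiff A (Cyl K E)) < \<eta>'" if A: "A \<in> P'" for A
  proof -
    have "kf A \<le> K" unfolding K_def using fP' A by (intro Max_ge) auto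
    then show ?thesis using kf A by blast
  qed
  then have "\<forall>A\<in>P'. \<exists>E. prob (sdiff A (Cyl K E)) < \<eta>'" by blast
  from bchoice[OF this] obtain Ef where Ef0: "\<forall>A\<in>P'. prob (sdiff A (Cyl K (Ef A))) < \<eta>'" by blast
  have Ef: "\<And>A. A \<in> P' \<Longrightarrow> prob (sdiff A (Cyl K (Ef A))) < \<eta>'" using Ef0 by blast
  obtain A0 where A0: "A0 \<in> P'" using ne by blast
  define g where "g w = (if \<exists>A\<in>P'. w \<in> Ef A then (SOME A. A \<in> P' \<and> w \<in> Ef A) else A0)" for w
  have sub: "{x \<in> space m. cell P x \<noteq> g (win (- int K) (2 * K + 1) x)} \<subseteq> (\<Union>A\<in>P'. sdiff A (Cyl K (Ef A)))"
  proof
    fix x assume "x \<in> {x \<in> space m. cell P x \<noteq> g (win (- int K) (2 * K + 1) x)}"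
    then have x: "x \<in> space m" and ne: "cell P x \<noteq> g (win (- int K) (2 * K + 1) x)" by auto
    define w where "w = win (- int K) (2 * K + 1) x"
    define A where "A = cell P x"
    have A: "A \<in> P'" "x \<in> A" unfolding A_def P'_def using cell[OF P x] x by auto
    show "x \<in> (\<Union>A\<in>P'. sdiff A (Cyl K (Ef A)))"
    proof (cases "\<exists>A\<in>P'. w \<in> Ef A")
      case True
      define B where "B = (SOME A. A \<in> P' \<and> w \<in> Ef A)"
      have B: "B \<in> P'" "w \<in> Ef B" unfolding B_def using someI_ex[of "\<lambda>A. A \<in> P' \<and> w \<in> Ef A"] True by auto
      have "g w = B" unfolding g_def B_def using True by simp
      then have "A \<noteq> B" using ne unfolding A_def w_def by simp
      moreover have BP: "B \<in> P" using B(1) P'P by blast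
      ultimately have "x \<notin> B" using cell_eq[OF P x BP] unfolding A_def by blast
      moreover have "x \<in> Cyl K (Ef B)" using x B(2) unfolding Cyl_def w_def by simp
      ultimately show ?thesis using B(1) by blast
    next
      case False
      then have "w \<notin> Ef A" using A(1) by blast
      then have "x \<notin> Cyl K (Ef A)" unfolding Cyl_def w_def by blast
      then show ?thesis using A by blast
    qed
  qed
  have sdsets: "sdiff A (Cyl K (Ef A)) \<in> sets m" if "A \<in> P'" for A
    using Ps[OF that] Cyl_sets[of K "Ef A"] by (intro sets.Un sets.Diff) auto
  have Usets: "(\<Union>A\<in>P'. sdiff A (Cyl K (Ef A))) \<in> sets m"
    using fP' sdsets by (intro sets.finite_UN) auto
  have "prob {x \<in> space m. cell P x \<noteq> g (win (- int K) (2 * K + 1) x)} \<le> prob (\<Union>A\<in>P'. sdiff A (Cyl K (Ef A)))"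
    by (rule finite_measure_mono[OF sub Usets])
  also have "\<dots> \<le> (\<Sum>A\<in>P'. prob (sdiff A (Cyl K (Ef A))))"
    using fP' sdsets by (intro finite_measure_subadditive_finite) auto
  also have "\<dots> < (\<Sum>A\<in>P'. \<eta>')" using fP' ne Ef by (intro sum_strict_mono) auto
  also have "\<dots> = \<eta>" using cP unfolding \<eta>'_def by simp
  finally show ?thesis by blast
qed

lemma join_equiv:
  assumes P: "meas_partition m P" and y: "y \<in> space m" and f: "\<And>i. i < n \<Longrightarrow> f i \<in> P"
  shows "(\<forall>i<n. (shift ^^ i) y \<in> f i) \<longleftrightarrow> Xn shift (cell P) n y = map f [0..<n]"
proof -
  have sy: "(shift ^^ i) y \<in> space m" for i
    using measurable_space[OF measurable_compose_n[OF shift_meas] y] .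
  have "(\<forall>i<n. (shift ^^ i) y \<in> f i) \<longleftrightarrow> (\<forall>i<n. cell P ((shift ^^ i) y) = f i)"
  proof (intro iffI allI impI)
    fix i assume "\<forall>i<n. (shift ^^ i) y \<in> f i" "i < n"
    then show "cell P ((shift ^^ i) y) = f i" using cell_eq[OF P sy f[OF \<open>i < n\<close>]] by blast
  next
    fix i assume "\<forall>i<n. cell P ((shift ^^ i) y) = f i" "i < n"
    then show "(shift ^^ i) y \<in> f i" using cell_eq[OF P sy f[OF \<open>i < n\<close>]] by blast
  qed
  also have "\<dots> \<longleftrightarrow> Xn shift (cell P) n y = map f [0..<n]"
  proof
    assume "\<forall>i<n. cell P ((shift ^^ i) y) = f i"
    then show "Xn shift (cell P) n y = map f [0..<n]" unfolding Xn_def by (intro nth_equalityI) auto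
  next
    assume e: "Xn shift (cell P) n y = map f [0..<n]"
    show "\<forall>i<n. cell P ((shift ^^ i) y) = f i"
    proof (intro allI impI)
      fix i assume i: "i < n"
      have "Xn shift (cell P) n y ! i = map f [0..<n] ! i" using e by simp
      then show "cell P ((shift ^^ i) y) = f i" using i unfolding Xn_def by simp
    qed
  qed
  finally show ?thesis .
qed

lemma part_entropy_join:
  assumes P: "meas_partition m P"
  shows "part_entropy m (join_part m shift P n) = ent m (Xn shift (cell P) n)"
proof -
  define V where "V = Xn shift (cell P) n"
  define E where "E v = V -` {v} \<inter> space m" for v
  define J where "J = join_part m shift P n"
  have sV: "simple_function m V" unfolding V_def by (rule sf_Xn[OF shift_meas sf_cell[OF P]])
  have fV: "finite (V ` space m)" by (rule simple_functionD(1)[OF sV])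
  have J1: "J - {{}} = E ` (V ` space m)"
  proof
    show "J - {{}} \<subseteq> E ` (V ` space m)"
    proof
      fix A assume "A \<in> J - {{}}"
      then obtain f where f: "\<And>i. i < n \<Longrightarrow> f i \<in> P" and A: "A = space m \<inter> (\<Inter>i<n. (shift ^^ i) -` f i)"
        and Ane: "A \<noteq> {}" unfolding J_def join_part_def by blast
      obtain x0 where x0: "x0 \<in> A" using Ane by blast
      have x0s: "x0 \<in> space m" using x0 A by blast
      have x0f: "\<forall>i<n. (shift ^^ i) x0 \<in> f i" using x0 A by blast
      have Vx0: "V x0 = map f [0..<n]" unfolding V_def by (rule iffD1[OF join_equiv[OF P x0s f] x0f])
      have "A = E (V x0)"
      proof (rule set_eqI)
        fix y
        show "y \<in> A \<longleftrightarrow> y \<in> E (V x0)"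
        proof (cases "y \<in> space m")
          case True
          have "y \<in> A \<longleftrightarrow> (\<forall>i<n. (shift ^^ i) y \<in> f i)" using True unfolding A by blast
          also have "\<dots> \<longleftrightarrow> V y = map f [0..<n]" unfolding V_def by (rule join_equiv[OF P True f])
          also have "\<dots> \<longleftrightarrow> y \<in> E (V x0)" unfolding Vx0 E_def using True by blast
          finally show ?thesis .
        next
          case False then show ?thesis unfolding A E_def by blast
        qed
      qed
      then show "A \<in> E ` (V ` space m)" using x0s by blast
    qed
    show "E ` (V ` space m) \<subseteq> J - {{}}"
    proof
      fix A assume "A \<in> E ` (V ` space m)"
      then obtain x0 where x0: "x0 \<in> space m" and A: "A = E (V x0)" by blast
      define f where "f i = cell P ((shift ^^ i) x0)" for i
      have sx: "(shift ^^ i) x0 \<in> space m" for i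
        using measurable_space[OF measurable_compose_n[OF shift_meas] x0] .
      have f: "f i \<in> P" for i unfolding f_def using cell[OF P sx] by blast
      have Vx0: "V x0 = map f [0..<n]" unfolding V_def Xn_def f_def by simp
      have "A = space m \<inter> (\<Inter>i<n. (shift ^^ i) -` f i)"
      proof (rule set_eqI)
        fix y
        show "y \<in> A \<longleftrightarrow> y \<in> space m \<inter> (\<Inter>i<n. (shift ^^ i) -` f i)"
        proof (cases "y \<in> space m")
          case True
          have "y \<in> A \<longleftrightarrow> V y = map f [0..<n]" unfolding A E_def Vx0 using True by blast
          also have "\<dots> \<longleftrightarrow> (\<forall>i<n. (shift ^^ i) y \<in> f i)" unfolding V_def by (rule join_equiv[OF P True f, symmetric])
          also have "\<dots> \<longleftrightarrow> y \<in> space m \<inter> (\<Inter>i<n. (shift ^^ i) -` f i)" using True by blast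
          finally show ?thesis .
        next
          case False then show ?thesis unfolding A E_def by blast
        qed
      qed
      then have "A \<in> J" unfolding J_def join_part_def mem_Collect_eq by (intro exI[of _ f] conjI allI impI f)
      moreover have "A \<noteq> {}" using x0 A unfolding E_def by auto
      ultimately show "A \<in> J - {{}}" by blast
    qed
  qed
  have injE: "inj_on E (V ` space m)"
  proof (rule inj_onI)
    fix v v' assume "v \<in> V ` space m" "v' \<in> V ` space m" "E v = E v'"
    then obtain x where "x \<in> space m" "V x = v" "E v = E v'" by blast
    then have "x \<in> E v'" unfolding E_def by auto
    then show "v = v'" using \<open>V x = v\<close> unfolding E_def by auto
  qed
  have finJ: "finite (J - {{}})" using J1 fV by simp
  have "part_entropy m J = - (\<Sum>A\<in>J - {{}}. measure m A * ln (measure m A))"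
  proof -
    have "(\<Sum>A\<in>J. measure m A * ln (measure m A)) = (\<Sum>A\<in>J - {{}}. measure m A * ln (measure m A))"
    proof (cases "{} \<in> J")
      case True
      have "J = insert {} (J - {{}})" using True by blast
      then have "(\<Sum>A\<in>J. measure m A * ln (measure m A)) = (\<Sum>A\<in>insert {} (J - {{}}). measure m A * ln (measure m A))"
        by simp
      also have "\<dots> = (\<Sum>A\<in>J - {{}}. measure m A * ln (measure m A))"
        using finJ by (subst sum.insert) auto
      finally show ?thesis .
    qed simp
    then show ?thesis unfolding part_entropy_def by simp
  qed
  also have "\<dots> = - (\<Sum>v\<in>V ` space m. measure m (E v) * ln (measure m (E v)))"
    unfolding J1 by (subst sum.reindex[OF injE]) simp
  also have "\<dots> = ent m V" unfolding ent_def pr_def E_def ..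
  finally show ?thesis unfolding J_def V_def .
qed

end

context nbs
begin

definition R :: "nat \<Rightarrow> (int \<Rightarrow> int) set" where
  "R e = {x \<in> space m. \<exists>i\<in>{..<e}. \<forall>L. win (int i) L x \<in> goodw (dseq \<beta>) L}"

lemma R_sets: "R e \<in> sets m"
  unfolding R_def
  by (intro sets.sets_Collect_finite_Ex sets.sets_Collect_countable_All win_sets) auto

lemma R_mono: "incseq R"
  unfolding incseq_def R_def by (auto intro: less_le_trans)

lemma R_full:
  assumes supp: "support m = D_set \<beta>"
  shows "(\<lambda>e. prob (R e)) \<longlonglongrightarrow> 1"
proof -
  define B where "B = space m - (\<Union>e. R e)"
  have RU: "(\<Union>e. R e) \<in> sets m" using R_sets by auto
  have Bs: "B \<in> sets m" unfolding B_def using RU by auto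
  have "B \<inter> support m = {}"
  proof (rule ccontr)
    assume "B \<inter> support m \<noteq> {}"
    then obtain x where xB: "x \<in> B" and xs: "x \<in> support m" by blast
    then have xD: "x \<in> D_set \<beta>" using supp by simp
    obtain i where i: "\<forall>L. win (int i) L x \<in> goodw (dseq \<beta>) L" using D_parse[OF xD] by blast
    have "x \<in> space m" using xB unfolding B_def by blast
    then have "x \<in> R (Suc i)" using i unfolding R_def by auto
    then show False using xB unfolding B_def by blast
  qed
  then have "emeasure m B = 0" by (rule null_off_support[OF Bs])
  then have "prob B = 0" by (simp add: measure_def)
  moreover have "prob B = 1 - prob (\<Union>e. R e)" unfolding B_def by (rule prob_compl[OF RU])
  ultimately have "prob (\<Union>e. R e) = 1" by simp
  moreover have "(\<lambda>e. prob (R e)) \<longlonglongrightarrow> prob (\<Union>e. R e)"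
    using finite_Lim_measure_incseq[of R] R_sets R_mono by auto
  ultimately show ?thesis by simp
qed

lemma window_good:
  assumes x: "x \<in> R e"
  shows "win 0 L x \<in> goodset (dseq \<beta>) (alphabet \<beta>) L e"
proof -
  obtain i where i: "i < e" "\<forall>L. win (int i) L x \<in> goodw (dseq \<beta>) L" and xs: "x \<in> space m"
    using x unfolding R_def by auto
  have "drop i (win 0 L x) \<in> goodw (dseq \<beta>) (L - i)"
  proof (cases "i \<le> L")
    case True
    have "win 0 (i + (L - i)) x = win 0 i x @ win (0 + int i) (L - i) x" by (rule win_add)
    then have "drop i (win 0 L x) = win (int i) (L - i) x" using True by simp
    then show ?thesis using i by simp
  next
    case False
    then show ?thesis by (simp add: goodw.simps)
  qed
  then show ?thesis unfolding goodset_def using win_in_alph[OF xs] i(1) by auto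
qed

definition NA :: nat where "NA = card (alphabet \<beta>)"

lemma NA_ge1: "real NA \<ge> 1"
  unfolding NA_def using finite_alph alph_ne by (simp add: Suc_le_eq card_gt_0_iff)

lemma ent_win_bound:
  assumes e: "e \<ge> 1"
  shows "ent m (win 0 L) \<le> ln (real e) + real e * ln (real NA) + real L * ln phi + 3
           + prob (space m - R e) * real L * ln (real NA)"
proof -
  define V where "V = win 0 L"
  define G where "G = goodset (dseq \<beta>) (alphabet \<beta>) L e"
  define sb where "sb = prob {x \<in> space m. V x \<notin> G}"
  define \<delta> where "\<delta> = prob (space m - R e)"
  have sV: "simple_function m V" unfolding V_def by (rule sf_win)
  have sb01: "0 \<le> sb" "sb \<le> 1" unfolding sb_def by auto
  have sbd: "sb \<le> \<delta>"
  proof -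
    have "{x \<in> space m. V x \<notin> G} \<subseteq> space m - R e"
      using window_good unfolding V_def G_def by blast
    then show ?thesis unfolding sb_def \<delta>_def using R_sets by (intro finite_measure_mono) auto
  qed
  have lnA: "0 \<le> ln (real NA)" using NA_ge1 by simp
  have lnphi: "0 \<le> ln phi" using phi_ge1 by simp
  define Cg where "Cg = real e * real NA ^ e * phi ^ L"
  have Cg1: "1 \<le> Cg" unfolding Cg_def using e NA_ge1 phi_ge1
    by (metis mult_ge1_I of_nat_1 of_nat_le_iff one_le_power)
  have lnCg: "ln Cg = ln (real e) + real e * ln (real NA) + real L * ln phi"
    unfolding Cg_def using e NA_ge1 phi_ge1 by (simp add: ln_mult ln_realpow)
  have finG: "finite G" unfolding G_def goodset_def
    by (rule finite_subset[OF _ finite_lists_length_eq[OF finite_alph, of L]]) auto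
  have cG: "real (card G) \<le> Cg" unfolding G_def Cg_def NA_def
    by (rule goodset_card[OF finite_alph alph_ne])
  have t1: "(1 - sb) * ln (real (card (V ` space m \<inter> G))) \<le> ln Cg"
  proof (cases "card (V ` space m \<inter> G) = 0")
    case True then show ?thesis using Cg1 by simp
  next
    case False
    have "real (card (V ` space m \<inter> G)) \<le> real (card G)" using finG by (intro of_nat_mono card_mono) auto
    then have le: "ln (real (card (V ` space m \<inter> G))) \<le> ln Cg" using False cG by simp
    have "0 \<le> ln (real (card (V ` space m \<inter> G)))" using False by simp
    then have "(1 - sb) * ln (real (card (V ` space m \<inter> G))) \<le> ln (real (card (V ` space m \<inter> G)))"
      using sb01 by (simp add: mult_left_le_one_le)
    then show ?thesis using le by simp
  qed
  have t2: "- ((1 - sb) * ln (1 - sb)) \<le> 1" using one_minus_ln_le[OF sb01] sb01 by simp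
  have t3: "sb * ln (real (card (V ` space m - G))) \<le> \<delta> * real L * ln (real NA)"
  proof (cases "card (V ` space m - G) = 0")
    case True then show ?thesis using lnA sb01 sbd by (simp add: measure_nonneg \<delta>_def)
  next
    case False
    have sub: "V ` space m - G \<subseteq> {w. set w \<subseteq> alphabet \<beta> \<and> length w = L}"
      unfolding V_def using win_in_alph by auto
    have "card (V ` space m - G) \<le> card {w. set w \<subseteq> alphabet \<beta> \<and> length w = L}"
      by (rule card_mono[OF finite_lists_length_eq[OF finite_alph] sub])
    also have "\<dots> = NA ^ L" unfolding NA_def by (rule card_lists_length_eq[OF finite_alph])
    finally have "real (card (V ` space m - G)) \<le> real NA ^ L" by (metis of_nat_le_iff of_nat_power)
    then have "ln (real (card (V ` space m - G))) \<le> ln (real NA ^ L)" using False by (intro ln_mono) auto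
    also have "\<dots> = real L * ln (real NA)" using NA_ge1 by (simp add: ln_realpow)
    finally have "sb * ln (real (card (V ` space m - G))) \<le> sb * (real L * ln (real NA))"
      using sb01 by (intro mult_left_mono) auto
    also have "\<dots> \<le> \<delta> * (real L * ln (real NA))" using sbd lnA by (intro mult_right_mono) auto
    finally show ?thesis by simp
  qed
  have t4: "- (sb * ln sb) \<le> 2"
  proof -
    have sq: "sqrt sb \<le> 1" using sb01 by simp
    show ?thesis using minus_xlnx_le_sqrt[OF sb01(1)] sq by linarith
  qed
  have "ent m V \<le> (1 - sb) * ln (real (card (V ` space m \<inter> G))) - (1 - sb) * ln (1 - sb)
            + sb * ln (real (card (V ` space m - G))) - sb * ln sb"
    unfolding sb_def by (rule ent_split[OF sV])
  also have "\<dots> \<le> ln Cg + 3 + \<delta> * real L * ln (real NA)" using t1 t2 t3 t4 by simp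
  finally show ?thesis unfolding lnCg V_def \<delta>_def by simp
qed

end

context nbs
begin

lemma entropy_bound_P:
  assumes P: "meas_partition m P" and supp: "support m = D_set \<beta>"
  shows "entropy_wrt m shift P \<le> ln phi"
proof -
  define X where "X = cell P"
  have sX: "simple_function m X" unfolding X_def by (rule sf_cell[OF P])
  define a where "a n = ent m (Xn shift X n)" for n
  have sub: "a (n + k) \<le> a n + a k" for n k
    unfolding a_def by (rule ent_Xn_subadd[OF mpres_shift sX])
  have nn: "0 \<le> a n" for n unfolding a_def by (rule ent_nonneg)
  have ew: "entropy_wrt m shift P = lim (\<lambda>n. a (Suc n) / real (Suc n))"
    unfolding entropy_wrt_def a_def X_def part_entropy_join[OF P] ..
  note fek = fekete[of a, OF sub nn]
  show ?thesis
  proof (rule field_le_epsilon)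
    fix \<epsilon> :: real assume eps: "\<epsilon> > 0"
    define N where "N = card (X ` space m)"
    have N1: "real N \<ge> 1" unfolding N_def using simple_functionD(1)[OF sX] not_empty
      by (simp add: Suc_le_eq card_gt_0_iff)
    have lnN: "0 \<le> ln (real N)" using N1 by simp
    define \<eta>1 where "\<eta>1 = min (\<epsilon> / (4 * (1 + ln (real N)))) ((\<epsilon> / 8)\<^sup>2)"
    have eta1: "\<eta>1 > 0" unfolding \<eta>1_def using eps lnN by simp
    obtain K g where Kg: "prob {x \<in> space m. X x \<noteq> g (win (- int K) (2 * K + 1) x)} < \<eta>1"
      using approx_X[OF P eta1] unfolding X_def by blast
    define Xp where "Xp x = g (win (- int K) (2 * K + 1) x)" for x
    have sXp: "simple_function m Xp"
    proof -
      have "simple_function m (g \<circ> win (- int K) (2 * K + 1))" by (rule simple_function_compose[OF sf_win])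
      then show ?thesis unfolding Xp_def comp_def .
    qed
    define s where "s = prob {x \<in> space m. X x \<noteq> Xp x}"
    have s: "0 \<le> s" "s < \<eta>1" unfolding s_def Xp_def using Kg by auto
    define U where "U x = (if X x = Xp x then None else Some (X x))" for x
    have entU: "ent m U \<le> \<epsilon> / 2"
    proof -
      have "ent m U \<le> s + s * ln (real N) + 2 * sqrt s"
        unfolding U_def s_def N_def by (rule ent_U_bound[OF sX sXp])
      also have "\<dots> = s * (1 + ln (real N)) + 2 * sqrt s" by (simp add: algebra_simps)
      also have "\<dots> \<le> \<epsilon> / 4 + 2 * (\<epsilon> / 8)"
      proof (rule add_mono)
        have "s * (1 + ln (real N)) \<le> \<eta>1 * (1 + ln (real N))" using s lnN by (intro mult_right_mono) auto
        also have "\<dots> \<le> (\<epsilon> / (4 * (1 + ln (real N)))) * (1 + ln (real N))"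
          unfolding \<eta>1_def using lnN by (intro mult_right_mono) auto
        also have "\<dots> = \<epsilon> / 4" proof - have "1 + ln (real N) > 0" using lnN by simp then show ?thesis by (simp add: field_simps) qed
        finally show "s * (1 + ln (real N)) \<le> \<epsilon> / 4" .
        have "s \<le> (\<epsilon> / 8)\<^sup>2" using s unfolding \<eta>1_def by simp
        then have "sqrt s \<le> sqrt ((\<epsilon> / 8)\<^sup>2)" by (rule real_sqrt_le_mono)
        then have "sqrt s \<le> \<epsilon> / 8" using eps by simp
        then show "2 * sqrt s \<le> 2 * (\<epsilon> / 8)" by simp
      qed
      finally show ?thesis by simp
    qed
    have lnA: "0 \<le> ln (real NA)" using NA_ge1 by simp
    define \<eta>2 where "\<eta>2 = \<epsilon> / (4 * (1 + ln (real NA)))"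
    have eta2: "\<eta>2 > 0" unfolding \<eta>2_def using eps lnA by simp
    have "\<forall>\<^sub>F e in sequentially. 1 - \<eta>2 < prob (R e)"
      using R_full[OF supp] eta2 by (auto simp: order_tendsto_iff)
    then obtain e0 where e0: "\<And>e. e \<ge> e0 \<Longrightarrow> 1 - \<eta>2 < prob (R e)" by (auto simp: eventually_sequentially)
    define e where "e = Suc e0"
    have e1: "e \<ge> 1" unfolding e_def by simp
    define \<delta> where "\<delta> = prob (space m - R e)"
    have \<delta>: "\<delta> = 1 - prob (R e)" unfolding \<delta>_def by (rule prob_compl[OF R_sets])
    have d01: "0 \<le> \<delta>" "\<delta> \<le> 1" unfolding \<delta>_def by auto
    have d2: "\<delta> < \<eta>2" using e0[of e] \<delta> unfolding e_def by simp
    have dA: "\<delta> * ln (real NA) \<le> \<epsilon> / 4"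
    proof -
      have "\<delta> * ln (real NA) \<le> \<eta>2 * ln (real NA)" using d2 lnA by (intro mult_right_mono) auto
      also have "\<dots> \<le> \<eta>2 * (1 + ln (real NA))" using eta2 by (intro mult_left_mono) auto
      also have "\<dots> = \<epsilon> / 4" unfolding \<eta>2_def proof - have "1 + ln (real NA) > 0" using lnA by simp then show "\<epsilon> / (4 * (1 + ln (real NA))) * (1 + ln (real NA)) = \<epsilon> / 4" by (simp add: field_simps) qed
      finally show ?thesis .
    qed
    have lnphi: "0 \<le> ln phi" using phi_ge1 by simp
    define C0 where "C0 = ln (real e) + real e * ln (real NA) + real (2 * K) * ln phi + 3 + real (2 * K) * ln (real NA)"
    have C0: "0 \<le> C0" unfolding C0_def using e1 lnA lnphi by simp
    define n where "n = nat \<lceil>4 * C0 / \<epsilon>\<rceil> + 1"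
    have n1: "n \<ge> 1" unfolding n_def by simp
    have nC: "C0 / real n \<le> \<epsilon> / 4"
    proof -
      have "4 * C0 / \<epsilon> \<le> real n" unfolding n_def by linarith
      then have "4 * C0 \<le> \<epsilon> * real n" using eps by (simp add: divide_le_eq mult.commute)
      then show ?thesis using n1 eps by (simp add: divide_le_eq field_simps)
    qed
    define L where "L = n + 2 * K"
    define W where "W = win (- int K) L"
    have sW: "simple_function m W" unfolding W_def by (rule sf_win)
    have gcond: "\<exists>g'. \<forall>x\<in>space m. Xp ((shift ^^ i) x) = g' (W x)" if i: "i < n" for i
    proof (intro exI ballI)
      fix x
      have "win (- int K) (2 * K + 1) ((shift ^^ i) x) = win (- int K + int i) (2 * K + 1) x"
        by (rule win_shift)
      also have "\<dots> = take (2 * K + 1) (drop i (W x))"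
        unfolding W_def L_def using i by (intro win_take_drop[symmetric]) simp
      finally show "Xp ((shift ^^ i) x) = (\<lambda>w. g (take (2 * K + 1) (drop i w))) (W x)"
        unfolding Xp_def by simp
    qed
    have key: "a n \<le> ent m W + real n * ent m U"
      unfolding a_def U_def by (rule key_ineq[OF mpres_shift sX sXp sW gcond])
    have entW: "ent m W = ent m (win 0 L)"
    proof -
      have "win (- int K) L \<circ> (shift ^^ K) = win 0 L"
        by (simp add: fun_eq_iff win_shift)
      then have "ent m (win 0 L) = ent m (win (- int K) L \<circ> (shift ^^ K))" by simp
      also have "\<dots> = ent m (win (- int K) L)"
        by (rule ent_mpres[OF mpres_funpow[OF mpres_shift] sf_win])
      finally show ?thesis unfolding W_def by simp
    qed
    have bW: "ent m (win 0 L) \<le> ln (real e) + real e * ln (real NA) + real L * ln phi + 3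
           + \<delta> * real L * ln (real NA)"
      unfolding \<delta>_def by (rule ent_win_bound[OF e1])
    have "\<delta> * real L * ln (real NA) \<le> real n * (\<delta> * ln (real NA)) + real (2 * K) * ln (real NA)"
    proof -
      have "\<delta> * real L * ln (real NA) = real n * (\<delta> * ln (real NA)) + real (2 * K) * (\<delta> * ln (real NA))"
        unfolding L_def by (simp add: algebra_simps)
      moreover have "real (2 * K) * (\<delta> * ln (real NA)) \<le> real (2 * K) * ln (real NA)"
        using d01 lnA by (intro mult_left_mono) (auto simp: mult_left_le_one_le)
      ultimately show ?thesis by simp
    qed
    then have "ent m W \<le> C0 + real n * ln phi + real n * (\<delta> * ln (real NA))"
      using bW entW unfolding C0_def L_def by (simp add: algebra_simps)
    then have "a n \<le> C0 + real n * ln phi + real n * (\<delta> * ln (real NA)) + real n * ent m U"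
      using key by simp
    also have "\<dots> \<le> C0 + real n * ln phi + real n * (\<epsilon> / 4) + real n * (\<epsilon> / 2)"
      using dA entU by (intro add_mono mult_left_mono) auto
    finally have "a n / real n \<le> (C0 + real n * ln phi + real n * (\<epsilon> / 4) + real n * (\<epsilon> / 2)) / real n"
      using n1 by (intro divide_right_mono) auto
    also have "\<dots> = C0 / real n + ln phi + \<epsilon> / 4 + \<epsilon> / 2" using n1 by (simp add: field_simps)
    also have "\<dots> \<le> ln phi + \<epsilon>" using nC by linarith
    finally have an: "a n / real n \<le> ln phi + \<epsilon>" .
    have "entropy_wrt m shift P \<le> a n / real n" unfolding ew by (rule fek(2)[OF n1])
    then show "entropy_wrt m shift P \<le> ln phi + \<epsilon>" using an by simp
  qed
qed

end

theorem proposition1: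
  fixes \<beta> :: real and m :: "(int \<Rightarrow> int) measure"
  assumes "\<beta> < -1"
    and "shift_inv_prob \<beta> m"
    and "ergodic m shift"
    and "\<forall>\<mu>. shift_inv_prob \<beta> \<mu> \<longrightarrow> ks_entropy \<mu> shift \<le> ks_entropy m shift"
    and "support m = D_set \<beta>"
  shows "ks_entropy m shift \<le> ereal (ln ((1 + sqrt 5) / 2))"
proof -
  interpret nbs \<beta> m by unfold_locales (rule assms(2))
  have "ereal (entropy_wrt m shift P) \<le> ereal (ln ((1 + sqrt 5) / 2))" if "P \<in> {P. meas_partition m P}" for P
    using entropy_bound_P[of P, OF _ assms(5)] that unfolding phi_def by simp
  then show ?thesis unfolding ks_entropy_def by (rule SUP_least)
qed

end
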